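(* Under the standing setting and assumptions (A0)–(A3) below, for every $n\in\mathbb N$, almost surely, \[ \mathbb E_n[d^2(x_{n+1},x^* )]\leq(1+2\lambda_n^2)\,d^2(x_n,x^* )-2\lambda_n\underline\alpha\, d^2(x_n,x^* )+\lambda_n^2V_n, \] where $V_n:=2\,\mathbb E_n\big[\|A_{\lambda_n}(\xi_{n+1},x_n)\|^2_{x_{n+1}}\big]+\int\|\phi^*\|^2_{x^*}\,d\mu$.
   Context: Geometry. A Hadamard space is a complete CAT(0) space: a geodesic metric space $(X,d)$ with $d^2(\gamma(tl),x)\leq (1-t)d^2(\gamma(0),x)+td^2(\gamma(l),x)-t(1-t)d^2(\gamma(0),\gamma(l))$ for all $x\in X$, geodesics $\gamma:[0,l]\to X$, $t\in[0,1]$; it is uniquely geodesic, $\gamma_{x,y}$ denoting the geodesic from $x$ to $y$. For $x\in X$, $\angle_x(\gamma,\eta):=\lim_{s,t\to0^+}\bar\angle_x(\gamma(s),\eta(t))$ is the Aleksandrov angle between nonconstant geodesics issuing from $x$; $\Sigma_xX$ is the completion of such geodesics modulo $\angle_x=0$; the tangent space $T_xX$ is the Euclidean cone over $\Sigma_xX$ (elements $t\gamma$, $t\ge0$, all $0\gamma$ identified to $0_x$, $\lambda(t\gamma):=(\lambda t)\gamma$), with metric $d_x(t\gamma,s\eta)=\sqrt{t^2+s^2-2ts\cos\angle_x(\gamma,\eta)}$, $\|t\gamma\|_x=t$, $g_x(t\gamma,s\eta)=ts\cos\angle_x(\gamma,\eta)$; $TX=\bigcup_xT_xX$. $\log_x:X\to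 T_xX$, $\log_xa:=d(x,a)\gamma_{x,a}$ ($a\ne x$), $\log_xx:=0_x$. Vector fields. $A:X\to2^{TX}$ with $A(x)\subseteq T_xX$ is monotone if $g_x(u,\log_xy)\le-g_y(v,\log_yx)$ for all $u\in A(x),v\in A(y)$, and strongly monotone with modulus $\alpha>0$ if $g_x(u,\log_xy)\le-g_y(v,\log_yx)-\alpha d^2(x,y)$. For monotone $A$ and $\lambda>0$, the resolvent $J_\lambda x$ is the unique $z$ with $\tfrac1\lambda\log_zx\in A(z)$ (if it exists); $A$ satisfies the surjectivity condition if such $z$ exists for all $\lambda>0,x\in X$. The Yosida approximate is $A_\lambda x:=\tfrac1\lambda\log_{J_\lambda x}x\in T_{J_\lambda x}X$. Integration. For a probability space and a separable Hadamard space $Y$, $L^p$ consists of measurable $Y$-valued maps with finite $p$-th moment of distance; the integral/expectation of an $L^1$ map is the barycenter of its distribution (minimizer of $z\mapsto\int(d^2(z,w)-d^2(w,y))$), and conditional expectation $\mathbb E[x\mid\mathcal G]$ of $x\in L^2$ is the $\mathcal G$-measurable $L^2$ map minimizing $\int d^2(z,x)$ (extended continuously to $L^1$); this applies to $Y=X$ and $Y=T_xX$. Standing setting. $(E,\mathcal E,\mu)$ and $(\Omega,\mathcal F,\mathbb P)$ are probability spaces; $X$ is a separable Hadamard space with every $T_xX$ separable. $A:E\times X\to2^{TX}$, $A(s,x)\subseteq T_xX$, is a random monotone vector field: each $A(s,\cdot)$ is monotone and $s\mapsto J_\lambda(s,x)$ is $\mathcal E/\mathcal B(X)$-measurable for every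 $x,\lambda$, where $J_\lambda(s,\cdot)$, $A_\lambda(s,\cdot)$ denote resolvent and Yosida approximate of $A(s,\cdot)$; moreover each $A(s,\cdot)$ satisfies the surjectivity condition. For $x\in X$, $S^p_A(x)$ is the set of measurable $\phi:E\to T_xX$ with $\phi(s)\in A(s,x)$ for all $s$ and $\phi\in L^p(E,T_xX,\mu)$; the mean field is $\underline A(x):=\{\int\phi\,d\mu\mid\phi\in S^1_A(x)\}$; $\mathcal Z_A(2):=\{x\mid\exists\phi\in S^2_A(x),\ \int\phi\,d\mu=0_x\}$. Given $x_0\in X$, $(\lambda_n)\subseteq(0,\infty)$ and random variables $\xi_n:\Omega\to E$, the iteration is $x_{n+1}:=J_{\lambda_n}(\xi_{n+1},x_n)$; $\mathcal F_n:=\sigma(\xi_1,\dots,\xi_n)$ ($\mathcal F_0$ trivial), $\mathbb E_n[\cdot]:=\mathbb E[\cdot\mid\mathcal F_n]$. Note $\|A_{\lambda_n}(\xi_{n+1},x_n)\|_{x_{n+1}}=d(x_n,x_{n+1})/\lambda_n$. Assumptions. (A0) $\sum_n\lambda_n^2<\infty$, $\sum_n\lambda_n=\infty$, and $(\xi_{n+1})$ is i.i.d. with distribution $\mu$. (A1) each $A(s,\cdot)$ is strongly monotone with modulus $\alpha(s)\in(0,1]$, where $\alpha:E\to(0,1]$ is measurable with $\underline\alpha:=\int\alpha\,d\mu>0$. (A2) $\underline A$ has a zero $x^*$ (i.e. $0_{x^*}\in\underline A(x^* )$) with $x^*\in\mathcal Z_A(2)$; a fixed $\phi^*\in S^2_A(x^*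 )$ with $\int\phi^*\,d\mu=0_{x^*}$ is chosen. (A3) $\mathbb E_n[g_{x^*}(\phi^*(\xi_{n+1}),\log_{x^*}x_n)]=0$ a.s. for every $n\in\mathbb N$. *)

theory Defs
  imports "HOL-Probability.Probability"
begin

definition is_geodesic :: "(real \<Rightarrow> 'a::metric_space) \<Rightarrow> real \<Rightarrow> bool" where
  "is_geodesic \<gamma> l \<longleftrightarrow> l \<ge> 0 \<and>
     (\<forall>s\<in>{0..l}. \<forall>t\<in>{0..l}. dist (\<gamma> s) (\<gamma> t) = \<bar>s - t\<bar>)"

definition geodesic_space :: "'a::metric_space itself \<Rightarrow> bool" where
  "geodesic_space _ \<longleftrightarrow>
     (\<forall>x y::'a. \<exists>\<gamma>. is_geodesic \<gamma> (dist x y) \<and> \<gamma> 0 = x \<and> \<gamma> (dist x y) = y)"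

definition CAT0_ineq :: "'a::metric_space itself \<Rightarrow> bool" where
  "CAT0_ineq _ \<longleftrightarrow>
     (\<forall>(\<gamma>::real \<Rightarrow> 'a) l x t. is_geodesic \<gamma> l \<and> t \<in> {0..1} \<longrightarrow>
        (dist (\<gamma> (t * l)) x)\<^sup>2 \<le> (1 - t) * (dist (\<gamma> 0) x)\<^sup>2 + t * (dist (\<gamma> l) x)\<^sup>2
                                   - t * (1 - t) * (dist (\<gamma> 0) (\<gamma> l))\<^sup>2)"

definition hadamard_space :: "'a::metric_space itself \<Rightarrow> bool" where
  "hadamard_space T \<longleftrightarrow> (\<forall>f::nat \<Rightarrow> 'a. Cauchy f \<longrightarrow> convergent f) \<and> geodesic_space T \<and> CAT0_ineq T"

text \<open>The geodesic from x to y, parametrised on [0, d(x,y)] and extended constantly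
  outside this interval (to make it a unique function).\<close>
definition geod_seg :: "'a::metric_space \<Rightarrow> 'a \<Rightarrow> real \<Rightarrow> 'a" where
  "geod_seg x y = (THE \<gamma>. is_geodesic \<gamma> (dist x y) \<and> \<gamma> 0 = x \<and> \<gamma> (dist x y) = y \<and>
                        (\<forall>s. \<gamma> s = \<gamma> (max 0 (min (dist x y) s))))"

text \<open>A nonconstant geodesic issuing from x is represented as a pair (l, gamma).\<close>
type_synonym 'a geod = "real \<times> (real \<Rightarrow> 'a)"

definition geods_from :: "'a::metric_space \<Rightarrow> 'a geod set" where
  "geods_from x = {(l, \<gamma>). l > 0 \<and> is_geodesic \<gamma> l \<and> \<gamma> 0 = x}"

definition cmp_angle :: "'a::metric_space \<Rightarrow> 'a \<Rightarrow> 'a \<Rightarrow> real" where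
  "cmp_angle x a b = arccos (((dist x a)\<^sup>2 + (dist x b)\<^sup>2 - (dist a b)\<^sup>2) / (2 * dist x a * dist x b))"

definition alex_angle :: "'a::metric_space \<Rightarrow> 'a geod \<Rightarrow> 'a geod \<Rightarrow> real" where
  "alex_angle x \<gamma> \<eta> =
     Lim (at_right 0 \<times>\<^sub>F at_right 0) (\<lambda>(s, t). cmp_angle x (snd \<gamma> s) (snd \<eta> t))"

text \<open>Points of the completion of the space of directions: angle-Cauchy sequences of
  nonconstant geodesics issuing from x (identified via the induced distance).\<close>
definition dir_seqs :: "'a::metric_space \<Rightarrow> (nat \<Rightarrow> 'a geod) set" where
  "dir_seqs x = {\<sigma>. (\<forall>n. \<sigma> n \<in> geods_from x) \<and>
      (\<forall>e>0. \<exists>N. \<forall>m\<ge>N. \<forall>n\<ge>N. alex_angle x (\<sigma> m) (\<sigma> n) < e)}"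

definition seq_angle :: "'a::metric_space \<Rightarrow> (nat \<Rightarrow> 'a geod) \<Rightarrow> (nat \<Rightarrow> 'a geod) \<Rightarrow> real" where
  "seq_angle x \<sigma> \<tau> = lim (\<lambda>n. alex_angle x (\<sigma> n) (\<tau> n))"

text \<open>Representatives t*sigma of elements of the Euclidean cone; for t = 0 the direction
  is irrelevant (all 0*sigma are identified with the origin 0_x).\<close>
type_synonym 'a trep = "real \<times> (nat \<Rightarrow> 'a geod)"

definition treps :: "'a::metric_space \<Rightarrow> 'a trep set" where
  "treps x = {(t, \<sigma>). t = 0 \<or> (t > 0 \<and> \<sigma> \<in> dir_seqs x)}"

definition rep_dist :: "'a::metric_space \<Rightarrow> 'a trep \<Rightarrow> 'a trep \<Rightarrow> real" where
  "rep_dist x v w = sqrt ((fst v)\<^sup>2 + (fst w)\<^sup>2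
                      - 2 * fst v * fst w * cos (seq_angle x (snd v) (snd w)))"

definition rep_inner :: "'a::metric_space \<Rightarrow> 'a trep \<Rightarrow> 'a trep \<Rightarrow> real" where
  "rep_inner x v w = fst v * fst w * cos (seq_angle x (snd v) (snd w))"

text \<open>Tangent vectors are equivalence classes of representatives at distance 0.\<close>
type_synonym 'a tvec = "'a trep set"

definition tclass :: "'a::metric_space \<Rightarrow> 'a trep \<Rightarrow> 'a tvec" where
  "tclass x v = {w \<in> treps x. rep_dist x v w = 0}"

definition tangent_space :: "'a::metric_space \<Rightarrow> 'a tvec set" where
  "tangent_space x = tclass x ` treps x"

definition tdist :: "'a::metric_space \<Rightarrow> 'a tvec \<Rightarrow> 'a tvec \<Rightarrow> real" where
  "tdist x U V = rep_dist x (SOME u. u \<in> U) (SOME v. v \<in> V)"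

definition tinner :: "'a::metric_space \<Rightarrow> 'a tvec \<Rightarrow> 'a tvec \<Rightarrow> real" where
  "tinner x U V = rep_inner x (SOME u. u \<in> U) (SOME v. v \<in> V)"

definition tnorm :: "'a::metric_space \<Rightarrow> 'a tvec \<Rightarrow> real" where
  "tnorm x U = fst (SOME u. u \<in> U)"

definition tzero :: "'a::metric_space \<Rightarrow> 'a tvec" where
  "tzero x = tclass x (0, undefined)"

definition tscale :: "'a::metric_space \<Rightarrow> real \<Rightarrow> 'a tvec \<Rightarrow> 'a tvec" where
  "tscale x c U = (let u = (SOME u. u \<in> U) in tclass x (c * fst u, snd u))"

definition tlog :: "'a::metric_space \<Rightarrow> 'a \<Rightarrow> 'a tvec" where
  "tlog x a = (if a = x then tzero x
               else tclass x (dist x a, \<lambda>n. (dist x a, geod_seg x a)))"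

definition tangent_topology :: "'a::metric_space \<Rightarrow> 'a tvec topology" where
  "tangent_topology x = topology (\<lambda>U. U \<subseteq> tangent_space x \<and>
      (\<forall>u\<in>U. \<exists>e>0. {v \<in> tangent_space x. tdist x u v < e} \<subseteq> U))"

definition tangent_borel :: "'a::metric_space \<Rightarrow> 'a tvec measure" where
  "tangent_borel x = sigma (tangent_space x) {U. openin (tangent_topology x) U}"

type_synonym 'a vfield = "'a \<Rightarrow> 'a tvec set"

definition monotone_vf :: "'a::metric_space vfield \<Rightarrow> bool" where
  "monotone_vf A \<longleftrightarrow> (\<forall>x y. \<forall>u\<in>A x. \<forall>v\<in>A y.
      tinner x u (tlog x y) \<le> - tinner y v (tlog y x))"

definition strongly_monotone_vf :: "'a::metric_space vfield \<Rightarrow> real \<Rightarrow> bool" where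
  "strongly_monotone_vf A \<alpha> \<longleftrightarrow> \<alpha> > 0 \<and> (\<forall>x y. \<forall>u\<in>A x. \<forall>v\<in>A y.
      tinner x u (tlog x y) \<le> - tinner y v (tlog y x) - \<alpha> * (dist x y)\<^sup>2)"

definition resolvent :: "'a::metric_space vfield \<Rightarrow> real \<Rightarrow> 'a \<Rightarrow> 'a" where
  "resolvent A l x = (THE z. tscale z (1 / l) (tlog z x) \<in> A z)"

definition surjectivity_cond :: "'a::metric_space vfield \<Rightarrow> bool" where
  "surjectivity_cond A \<longleftrightarrow> (\<forall>l>0. \<forall>x. \<exists>z. tscale z (1 / l) (tlog z x) \<in> A z)"

definition yosida :: "'a::metric_space vfield \<Rightarrow> real \<Rightarrow> 'a \<Rightarrow> 'a tvec" where
  "yosida A l x = tscale (resolvent A l x) (1 / l) (tlog (resolvent A l x) x)"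

definition tangent_Lp :: "'e measure \<Rightarrow> 'a::metric_space \<Rightarrow> nat \<Rightarrow> ('e \<Rightarrow> 'a tvec) \<Rightarrow> bool" where
  "tangent_Lp M x p \<phi> \<longleftrightarrow> \<phi> \<in> M \<rightarrow>\<^sub>M tangent_borel x \<and>
      integrable M (\<lambda>s. (tdist x (\<phi> s) (tzero x)) ^ p)"

definition is_tangent_barycenter :: "'e measure \<Rightarrow> 'a::metric_space \<Rightarrow> ('e \<Rightarrow> 'a tvec) \<Rightarrow> 'a tvec \<Rightarrow> bool" where
  "is_tangent_barycenter M x \<phi> b \<longleftrightarrow> b \<in> tangent_space x \<and>
     (\<forall>z\<in>tangent_space x.
        (\<integral>s. (tdist x b (\<phi> s))\<^sup>2 - (tdist x (\<phi> s) (tzero x))\<^sup>2 \<partial>M)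
          \<le> (\<integral>s. (tdist x z (\<phi> s))\<^sup>2 - (tdist x (\<phi> s) (tzero x))\<^sup>2 \<partial>M))"

definition selections :: "'e measure \<Rightarrow> ('e \<Rightarrow> 'a::metric_space vfield) \<Rightarrow> nat \<Rightarrow> 'a \<Rightarrow> ('e \<Rightarrow> 'a tvec) set" where
  "selections M A p x = {\<phi>. (\<forall>s\<in>space M. \<phi> s \<in> A s x) \<and> tangent_Lp M x p \<phi>}"

definition natural_filtration :: "'w measure \<Rightarrow> 'e measure \<Rightarrow> (nat \<Rightarrow> 'w \<Rightarrow> 'e) \<Rightarrow> nat \<Rightarrow> 'w measure" where
  "natural_filtration P M \<xi> n =
     sigma (space P) {\<xi> i -` B \<inter> space P | i B. i \<in> {1..n} \<and> B \<in> sets M}"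

end

theory Submission
  imports Defs
begin

lemma had_geod: "hadamard_space TYPE('a::metric_space) \<Longrightarrow> geodesic_space TYPE('a)"
  and had_cat0: "hadamard_space TYPE('a::metric_space) \<Longrightarrow> CAT0_ineq TYPE('a)"
  by (auto simp: hadamard_space_def)

lemma geod_dist: "is_geodesic \<gamma> l \<Longrightarrow> s \<in> {0..l} \<Longrightarrow> t \<in> {0..l} \<Longrightarrow> dist (\<gamma> s) (\<gamma> t) = \<bar>s - t\<bar>"
  by (auto simp: is_geodesic_def)

lemma geod_restrict: "is_geodesic \<gamma> l \<Longrightarrow> 0 \<le> s \<Longrightarrow> s \<le> l \<Longrightarrow> is_geodesic \<gamma> s"
  by (auto simp: is_geodesic_def)

lemma cat0_apply:
  assumes "CAT0_ineq TYPE('a::metric_space)" "is_geodesic (\<gamma>::real \<Rightarrow> 'a) l" "0 \<le> t" "t \<le> 1"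
  shows "(dist (\<gamma> (t * l)) z)\<^sup>2 \<le> (1 - t) * (dist (\<gamma> 0) z)\<^sup>2 + t * (dist (\<gamma> l) z)\<^sup>2
                                   - t * (1 - t) * (dist (\<gamma> 0) (\<gamma> l))\<^sup>2"
  using assms unfolding CAT0_ineq_def by auto

lemma geod_unique:
  assumes cat: "CAT0_ineq TYPE('a::metric_space)"
    and g: "is_geodesic (\<gamma>::real \<Rightarrow> 'a) l" and h: "is_geodesic \<eta> l"
    and e0: "\<gamma> 0 = \<eta> 0" and el: "\<gamma> l = \<eta> l" and s: "s \<in> {0..l}"
  shows "\<gamma> s = \<eta> s"
proof (cases "l = 0")
  case True then show ?thesis using s e0 by auto
next
  case False
  have l: "l > 0" using g False by (auto simp: is_geodesic_def)
  define t where "t = s / l"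
  have t: "0 \<le> t" "t \<le> 1" using s l by (auto simp: t_def field_simps)
  have stl: "t * l = s" using l by (simp add: t_def)
  have 1: "dist (\<gamma> 0) (\<eta> s) = s" using h s e0 geod_dist[OF h, of 0 s] by auto
  have 2: "dist (\<gamma> l) (\<eta> s) = l - s" using h s el geod_dist[OF h, of l s] by auto
  have 3: "dist (\<gamma> 0) (\<gamma> l) = l" using geod_dist[OF g, of 0 l] l by auto
  have "(dist (\<gamma> s) (\<eta> s))\<^sup>2 \<le> (1 - t) * s\<^sup>2 + t * (l - s)\<^sup>2 - t * (1 - t) * l\<^sup>2"
    using cat0_apply[OF cat g t, of "\<eta> s"] 1 2 3 stl by simp
  also have "\<dots> = 0" using stl by (simp add: power2_eq_square algebra_simps flip: stl)
  finally show ?thesis by simp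
qed

lemma geod_seg_props:
  assumes had: "hadamard_space TYPE('a::metric_space)"
  shows "is_geodesic (geod_seg x y) (dist x y) \<and> geod_seg x y 0 = (x::'a) \<and> geod_seg x y (dist x y) = y
     \<and> (\<forall>s. geod_seg x y s = geod_seg x y (max 0 (min (dist x y) s)))"
proof -
  let ?d = "dist x y"
  let ?P = "\<lambda>\<gamma>. is_geodesic \<gamma> ?d \<and> \<gamma> 0 = x \<and> \<gamma> ?d = y \<and> (\<forall>s. \<gamma> s = \<gamma> (max 0 (min ?d s)))"
  obtain \<gamma> where g: "is_geodesic \<gamma> ?d" "\<gamma> 0 = x" "\<gamma> ?d = y"
    using had_geod[OF had] unfolding geodesic_space_def by blast
  define \<gamma>' where "\<gamma>' s = \<gamma> (max 0 (min ?d s))" for s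
  have eq: "\<gamma>' s = \<gamma> s" if "s \<in> {0..?d}" for s using that by (auto simp: \<gamma>'_def)
  have "?P \<gamma>'"
  proof (intro conjI allI)
    show "is_geodesic \<gamma>' ?d" using g(1) eq unfolding is_geodesic_def by auto
    show "\<gamma>' 0 = x" using g by (auto simp: \<gamma>'_def)
    show "\<gamma>' ?d = y" using g by (auto simp: \<gamma>'_def)
    show "\<gamma>' s = \<gamma>' (max 0 (min ?d s))" for s by (auto simp: \<gamma>'_def)
  qed
  moreover have "\<gamma>1 = \<gamma>2" if "?P \<gamma>1" "?P \<gamma>2" for \<gamma>1 \<gamma>2
  proof
    fix s
    have "\<gamma>1 (max 0 (min ?d s)) = \<gamma>2 (max 0 (min ?d s))"
      by (rule geod_unique[OF had_cat0[OF had]]) (use that in auto)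
    then show "\<gamma>1 s = \<gamma>2 s" using that by metis
  qed
  ultimately have "\<exists>!\<gamma>. ?P \<gamma>" by blast
  then have "?P (geod_seg x y)" unfolding geod_seg_def by (rule theI')
  then show ?thesis by blast
qed

definition ccos :: "'a::metric_space \<Rightarrow> 'a \<Rightarrow> 'a \<Rightarrow> real" where
  "ccos x a b = ((dist x a)\<^sup>2 + (dist x b)\<^sup>2 - (dist a b)\<^sup>2) / (2 * dist x a * dist x b)"

lemma cmp_angle_ccos: "cmp_angle x a b = arccos (ccos x a b)"
  by (simp add: cmp_angle_def ccos_def)

lemma ccos_sym: "ccos x a b = ccos x b a"
  by (simp add: ccos_def dist_commute mult_ac add_ac)

lemma cmp_angle_sym: "cmp_angle x a b = cmp_angle x b a"
  by (simp add: cmp_angle_ccos ccos_sym)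

lemma ccos_range:
  assumes "a \<noteq> x" "b \<noteq> x"
  shows "-1 \<le> ccos x a b" "ccos x a b \<le> 1"
proof -
  let ?p = "dist x a" and ?q = "dist x b" and ?r = "dist a b"
  have p: "?p > 0" and q: "?q > 0" using assms by auto
  have t1: "?p \<le> ?q + ?r" using dist_triangle[of x a b] by (simp add: dist_commute)
  have t2: "?q \<le> ?p + ?r" using dist_triangle[of x b a] by (simp add: dist_commute)
  have r1: "\<bar>?p - ?q\<bar> \<le> ?r" using t1 t2 by linarith
  have r2: "?r \<le> ?p + ?q" using dist_triangle[of a b x] by (simp add: dist_commute)
  have pq: "2 * ?p * ?q > 0" using p q by simp
  have "(?p - ?q)\<^sup>2 \<le> ?r\<^sup>2" using power_mono[OF r1, of 2] by simp
  then have "?p\<^sup>2 + ?q\<^sup>2 - ?r\<^sup>2 \<le> 2 * ?p * ?q" by (simp add: power2_eq_square algebra_simps)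
  then show "ccos x a b \<le> 1" unfolding ccos_def using pq by (simp add: divide_le_eq_1)
  have "?r\<^sup>2 \<le> (?p + ?q)\<^sup>2" using r2 by (simp add: power_mono)
  then have "- (2 * ?p * ?q) \<le> ?p\<^sup>2 + ?q\<^sup>2 - ?r\<^sup>2" by (simp add: power2_eq_square algebra_simps)
  then show "-1 \<le> ccos x a b" unfolding ccos_def using pq by (simp add: le_divide_eq)
qed

lemma cmp_range:
  assumes "a \<noteq> x" "b \<noteq> x"
  shows "0 \<le> cmp_angle x a b" "cmp_angle x a b \<le> pi"
  using ccos_range[OF assms] by (auto simp: cmp_angle_ccos intro: arccos_lbound arccos_ubound)

lemma cos_cmp:
  assumes "a \<noteq> x" "b \<noteq> x"
  shows "cos (cmp_angle x a b) = ccos x a b"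
  using ccos_range[OF assms] by (simp add: cmp_angle_ccos cos_arccos)

lemma dist_cmp:
  assumes "a \<noteq> x" "b \<noteq> x"
  shows "(dist a b)\<^sup>2 = (dist x a)\<^sup>2 + (dist x b)\<^sup>2 - 2 * dist x a * dist x b * cos (cmp_angle x a b)"
proof -
  have p: "dist x a > 0" "dist x b > 0" using assms by auto
  have "2 * dist x a * dist x b * ccos x a b = (dist x a)\<^sup>2 + (dist x b)\<^sup>2 - (dist a b)\<^sup>2"
    unfolding ccos_def using p by simp
  then show ?thesis unfolding cos_cmp[OF assms] by linarith
qed

lemma cmp_self: "a \<noteq> x \<Longrightarrow> cmp_angle x a a = 0"
proof -
  assume "a \<noteq> x"
  then have p: "dist x a > 0" by simp
  have "ccos x a a = 1" unfolding ccos_def using p by (simp add: power2_eq_square)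
  then show ?thesis by (simp add: cmp_angle_ccos)
qed

lemma ccos_mono:
  assumes cat: "CAT0_ineq TYPE('a::metric_space)"
    and g: "is_geodesic (\<gamma>::real \<Rightarrow> 'a) l" and g0: "\<gamma> 0 = x" and b: "b \<noteq> x"
    and s: "0 < s'" "s' \<le> s" "s \<le> l"
  shows "ccos x (\<gamma> s) b \<le> ccos x (\<gamma> s') b"
proof -
  define t where "t = s' / s"
  have spos: "s > 0" using s by simp
  have t: "0 < t" "t \<le> 1" using s by (auto simp: t_def field_simps)
  have ts: "t * s = s'" using spos by (simp add: t_def)
  have gs: "is_geodesic \<gamma> s" using geod_restrict[OF g, of s] s by simp
  define D where "D = dist x b"
  define e where "e = dist (\<gamma> s) b"
  define e' where "e' = dist (\<gamma> s') b"
  have D: "D > 0" using b by (simp add: D_def)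
  have d1: "dist x (\<gamma> s) = s" using geod_dist[OF g, of 0 s] g0 s by simp
  have d2: "dist x (\<gamma> s') = s'" using geod_dist[OF g, of 0 s'] g0 s by simp
  have "e'\<^sup>2 \<le> (1 - t) * D\<^sup>2 + t * e\<^sup>2 - t * (1 - t) * s\<^sup>2"
    using cat0_apply[OF cat gs, of t b] t ts d1 g0 unfolding e'_def e_def D_def by simp
  then have key: "s'\<^sup>2 + D\<^sup>2 - e'\<^sup>2 \<ge> t * (s\<^sup>2 + D\<^sup>2 - e\<^sup>2)"
    by (simp add: power2_eq_square algebra_simps flip: ts)
  have "ccos x (\<gamma> s) b = t * (s\<^sup>2 + D\<^sup>2 - e\<^sup>2) / (2 * s' * D)"
    unfolding ccos_def d1 using t spos D by (simp add: e_def D_def flip: ts)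
  also have "\<dots> \<le> (s'\<^sup>2 + D\<^sup>2 - e'\<^sup>2) / (2 * s' * D)"
    using key s D by (intro divide_right_mono) auto
  also have "\<dots> = ccos x (\<gamma> s') b" unfolding ccos_def d2 by (simp add: e'_def D_def)
  finally show ?thesis .
qed

lemma cmp_mono:
  assumes cat: "CAT0_ineq TYPE('a::metric_space)"
    and g: "is_geodesic (\<gamma>::real \<Rightarrow> 'a) l" and g0: "\<gamma> 0 = x" and b: "b \<noteq> x"
    and s: "0 < s'" "s' \<le> s" "s \<le> l"
  shows "cmp_angle x (\<gamma> s') b \<le> cmp_angle x (\<gamma> s) b"
proof -
  have n1: "\<gamma> s \<noteq> x" "\<gamma> s' \<noteq> x" using geod_dist[OF g, of 0 s] geod_dist[OF g, of 0 s'] g0 s by auto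
  show ?thesis unfolding cmp_angle_ccos
    by (rule arccos_le_arccos) (use ccos_range[OF n1(1) b] ccos_range[OF n1(2) b] ccos_mono[OF assms] in auto)
qed

lemma geods_from_iff: "(l, \<gamma>) \<in> geods_from x \<longleftrightarrow> l > 0 \<and> is_geodesic \<gamma> l \<and> \<gamma> 0 = x"
  by (simp add: geods_from_def)

lemma geod_ne: "is_geodesic \<gamma> l \<Longrightarrow> \<gamma> 0 = x \<Longrightarrow> 0 < s \<Longrightarrow> s \<le> l \<Longrightarrow> \<gamma> s \<noteq> x"
  using geod_dist[of \<gamma> l 0 s] by auto

lemma geod_dist0: "is_geodesic \<gamma> l \<Longrightarrow> \<gamma> 0 = x \<Longrightarrow> 0 \<le> s \<Longrightarrow> s \<le> l \<Longrightarrow> dist x (\<gamma> s) = s"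
  using geod_dist[of \<gamma> l 0 s] by auto

lemma ev_right: "0 < (c::real) \<Longrightarrow> eventually (\<lambda>s. s \<in> {0<..c}) (at_right 0)"
  unfolding eventually_at_right_field by (intro exI[of _ c]) auto

lemma cmp_mono2:
  assumes cat: "CAT0_ineq TYPE('a::metric_space)"
    and g: "is_geodesic (\<gamma>::real \<Rightarrow> 'a) l1" "\<gamma> 0 = x"
    and h: "is_geodesic (\<eta>::real \<Rightarrow> 'a) l2" "\<eta> 0 = x"
    and s: "0 < s'" "s' \<le> s" "s \<le> l1" and t: "0 < t'" "t' \<le> t" "t \<le> l2"
  shows "cmp_angle x (\<gamma> s') (\<eta> t') \<le> cmp_angle x (\<gamma> s) (\<eta> t)"
proof -
  have "cmp_angle x (\<gamma> s') (\<eta> t') \<le> cmp_angle x (\<gamma> s) (\<eta> t')"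
    using cmp_mono[OF cat g(1,2) geod_ne[OF h, of t'] s] t by simp
  also have "\<dots> = cmp_angle x (\<eta> t') (\<gamma> s)" by (rule cmp_angle_sym)
  also have "\<dots> \<le> cmp_angle x (\<eta> t) (\<gamma> s)"
    using cmp_mono[OF cat h(1,2) geod_ne[OF g, of s] t] s by simp
  also have "\<dots> = cmp_angle x (\<gamma> s) (\<eta> t)" by (rule cmp_angle_sym)
  finally show ?thesis .
qed

lemma alex_angle_char:
  assumes cat: "CAT0_ineq TYPE('a::metric_space)"
    and g: "(l1, \<gamma>) \<in> geods_from (x::'a)" and h: "(l2, \<eta>) \<in> geods_from x"
  defines "I \<equiv> Inf ((\<lambda>(s,t). cmp_angle x (\<gamma> s) (\<eta> t)) ` ({0<..l1} \<times> {0<..l2}))"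
  shows "alex_angle x (l1, \<gamma>) (l2, \<eta>) = I"
    and "0 \<le> I" "I \<le> pi"
    and "\<And>s t. s \<in> {0<..l1} \<Longrightarrow> t \<in> {0<..l2} \<Longrightarrow> I \<le> cmp_angle x (\<gamma> s) (\<eta> t)"
    and "\<And>e. e > 0 \<Longrightarrow> \<exists>s0\<in>{0<..l1}. \<exists>t0\<in>{0<..l2}. \<forall>s\<in>{0<..s0}. \<forall>t\<in>{0<..t0}.
            cmp_angle x (\<gamma> s) (\<eta> t) < I + e"
proof -
  have g': "l1 > 0" "is_geodesic \<gamma> l1" "\<gamma> 0 = x" using g by (auto simp: geods_from_iff)
  have h': "l2 > 0" "is_geodesic \<eta> l2" "\<eta> 0 = x" using h by (auto simp: geods_from_iff)
  define f where "f = (\<lambda>(s,t). cmp_angle x (\<gamma> s) (\<eta> t))"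
  define S where "S = {0<..l1} \<times> {0<..l2}"
  have I: "I = Inf (f ` S)" by (simp add: I_def f_def S_def)
  have fr: "0 \<le> f (s,t)" "f (s,t) \<le> pi" if "s \<in> {0<..l1}" "t \<in> {0<..l2}" for s t
    using cmp_range[OF geod_ne[OF g'(2,3)] geod_ne[OF h'(2,3)]] that by (auto simp: f_def)
  have Sne: "f ` S \<noteq> {}" using g' h' by (auto simp: S_def)
  have bdd: "bdd_below (f ` S)" unfolding bdd_below_def using fr by (auto simp: S_def intro!: exI[of _ 0])
  show lb: "I \<le> cmp_angle x (\<gamma> s) (\<eta> t)" if "s \<in> {0<..l1}" "t \<in> {0<..l2}" for s t
  proof -
    have "I \<le> f (s,t)" unfolding I using that bdd by (auto simp: S_def intro!: cInf_lower)
    then show ?thesis by (simp add: f_def)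
  qed
  show "0 \<le> I" unfolding I using Sne fr by (intro cInf_greatest) (auto simp: S_def)
  show "I \<le> pi" using lb[of l1 l2] fr[of l1 l2] g' h' by (auto simp: f_def)
  have mono: "f (s',t') \<le> f (s,t)" if "0 < s'" "s' \<le> s" "s \<le> l1" "0 < t'" "t' \<le> t" "t \<le> l2" for s s' t t'
    using cmp_mono2[OF cat g'(2,3) h'(2,3)] that by (simp add: f_def)
  show ub: "\<exists>s0\<in>{0<..l1}. \<exists>t0\<in>{0<..l2}. \<forall>s\<in>{0<..s0}. \<forall>t\<in>{0<..t0}. cmp_angle x (\<gamma> s) (\<eta> t) < I + e"
    if "e > 0" for e
  proof -
    have "\<exists>y\<in>f ` S. y < I + e" unfolding I using Sne that by (intro cInf_lessD) auto
    then obtain s0 t0 where st: "s0 \<in> {0<..l1}" "t0 \<in> {0<..l2}" "f (s0,t0) < I + e"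
      by (auto simp: S_def)
    show ?thesis
    proof (intro bexI ballI)
      fix s t assume "s \<in> {0<..s0}" "t \<in> {0<..t0}"
      then have "f (s,t) \<le> f (s0,t0)" using st by (intro mono) auto
      then show "cmp_angle x (\<gamma> s) (\<eta> t) < I + e" using st by (simp add: f_def)
    qed (use st in auto)
  qed
  have tend: "(f \<longlongrightarrow> I) (at_right 0 \<times>\<^sub>F at_right 0)"
  proof (rule order_tendstoI)
    fix a assume a: "a < I"
    show "\<forall>\<^sub>F st in at_right 0 \<times>\<^sub>F at_right 0. a < f st"
      unfolding eventually_prod_filter
    proof (intro exI conjI allI impI)
      show "\<forall>\<^sub>F s in at_right 0. s \<in> {0<..l1}" using g'(1) by (intro ev_right) auto
      show "\<forall>\<^sub>F s in at_right 0. s \<in> {0<..l2}" using h'(1) by (intro ev_right) auto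
      fix s t assume "s \<in> {0<..l1}" "t \<in> {0<..l2}"
      then show "a < f (s, t)" using lb[of s t] a by (simp add: f_def)
    qed
  next
    fix a assume a: "I < a"
    obtain s0 t0 where st: "s0 \<in> {0<..l1}" "t0 \<in> {0<..l2}"
      "\<forall>s\<in>{0<..s0}. \<forall>t\<in>{0<..t0}. cmp_angle x (\<gamma> s) (\<eta> t) < I + (a - I)"
      using ub[of "a - I"] a by auto
    show "\<forall>\<^sub>F st in at_right 0 \<times>\<^sub>F at_right 0. f st < a"
      unfolding eventually_prod_filter
    proof (intro exI conjI allI impI)
      show "\<forall>\<^sub>F s in at_right 0. s \<in> {0<..s0}" using st by (intro ev_right) auto
      show "\<forall>\<^sub>F s in at_right 0. s \<in> {0<..t0}" using st by (intro ev_right) auto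
      fix s t assume "s \<in> {0<..s0}" "t \<in> {0<..t0}"
      then show "f (s, t) < a" using st(3) by (auto simp: f_def)
    qed
  qed
  have ntriv0: "at_right (0::real) \<noteq> bot"
    using trivial_limit_at_right_real[of "0::real"] by (simp add: trivial_limit_def)
  have ntriv: "\<not> trivial_limit (at_right (0::real) \<times>\<^sub>F at_right (0::real))"
    using ntriv0 by (simp add: prod_filter_eq_bot)
  show "alex_angle x (l1, \<gamma>) (l2, \<eta>) = I"
  proof -
    have "alex_angle x (l1, \<gamma>) (l2, \<eta>) = Lim (at_right 0 \<times>\<^sub>F at_right 0) f"
      unfolding alex_angle_def f_def by simp
    then show ?thesis using tendsto_Lim[OF ntriv tend] by simp
  qed
qed

lemma planar_F1: fixes sa ca sb cb :: real
  assumes "sa^2 + ca^2 = 1" "sb^2 + cb^2 = 1"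
  shows "(sa+sb)^2 + (sa*cb + ca* sb)^2 - 2*(sa*cb+ca* sb)*ca*(sa+sb) = sa^2 * (2 - 2*(ca*cb - sa* sb))"
  using assms by algebra

lemma planar_F2: fixes sa ca sb cb :: real
  assumes "sa^2 + ca^2 = 1" "sb^2 + cb^2 = 1"
  shows "(sa*cb + ca* sb)^2 + (sa+sb)^2 - 2*(sa*cb+ca* sb)*cb*(sa+sb) = sb^2 * (2 - 2*(ca*cb - sa* sb))"
  using assms by algebra

lemma planar:
  fixes a b :: real
  assumes a: "0 < a" and b: "0 < b" and ab: "a + b < pi"
  defines "q \<equiv> sin (a + b) / (sin a + sin b)" and "lam \<equiv> sin a / (sin a + sin b)"
  shows "q > 0" "0 < lam" "lam < 1"
    "1 + q\<^sup>2 - 2 * q * cos a = lam\<^sup>2 * (2 - 2 * cos (a + b))"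
    "q\<^sup>2 + 1 - 2 * q * cos b = (1 - lam)\<^sup>2 * (2 - 2 * cos (a + b))"
proof -
  have sa: "sin a > 0" using a ab b by (intro sin_gt_zero) auto
  have sb: "sin b > 0" using a ab b by (intro sin_gt_zero) auto
  have sab: "sin (a + b) > 0" using a ab b by (intro sin_gt_zero) auto
  have S: "sin a + sin b > 0" using sa sb by simp
  show "q > 0" unfolding q_def using sab S by simp
  show "0 < lam" "lam < 1" unfolding lam_def using sa sb S by (auto simp: field_simps)
  have e1: "(sin a)^2 + (cos a)^2 = 1" "(sin b)^2 + (cos b)^2 = 1" by simp_all
  have l1: "1 - lam = sin b / (sin a + sin b)" unfolding lam_def using S by (simp add: field_simps)
  have qS: "q * (sin a + sin b) = sin a * cos b + cos a * sin b" unfolding q_def sin_add using S by simp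
  have "(1 + q\<^sup>2 - 2 * q * cos a) * (sin a + sin b)^2 =
      (sin a + sin b)^2 + (q * (sin a + sin b))^2 - 2*(q * (sin a + sin b))*cos a*(sin a + sin b)"
    by (simp add: algebra_simps power2_eq_square)
  also have "\<dots> = (sin a + sin b)^2 + (sin a * cos b + cos a * sin b)^2 - 2*(sin a * cos b + cos a * sin b)*cos a*(sin a + sin b)"
    unfolding qS ..
  also have "\<dots> = (sin a)^2 * (2 - 2*(cos a * cos b - sin a * sin b))" by (rule planar_F1[OF e1])
  also have "\<dots> = lam\<^sup>2 * (2 - 2 * cos (a + b)) * (sin a + sin b)^2"
    unfolding lam_def cos_add using S by (simp add: power_divide)
  finally show "1 + q\<^sup>2 - 2 * q * cos a = lam\<^sup>2 * (2 - 2 * cos (a + b))" using S by simp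
  have "(q\<^sup>2 + 1 - 2 * q * cos b) * (sin a + sin b)^2 =
      (q * (sin a + sin b))^2 + (sin a + sin b)^2 - 2*(q * (sin a + sin b))*cos b*(sin a + sin b)"
    by (simp add: algebra_simps power2_eq_square)
  also have "\<dots> = (sin a * cos b + cos a * sin b)^2 + (sin a + sin b)^2 - 2*(sin a * cos b + cos a * sin b)*cos b*(sin a + sin b)"
    unfolding qS ..
  also have "\<dots> = (sin b)^2 * (2 - 2*(cos a * cos b - sin a * sin b))" by (rule planar_F2[OF e1])
  also have "\<dots> = (1 - lam)\<^sup>2 * (2 - 2 * cos (a + b)) * (sin a + sin b)^2"
    unfolding l1 cos_add using S by (simp add: power_divide)
  finally show "q\<^sup>2 + 1 - 2 * q * cos b = (1 - lam)\<^sup>2 * (2 - 2 * cos (a + b))" using S by simp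
qed


lemma cos_lt_mono: "0 \<le> x \<Longrightarrow> x < y \<Longrightarrow> y \<le> pi \<Longrightarrow> cos y < cos x"
  by (rule cos_monotone_0_pi) auto

lemma cos_le_mono: "0 \<le> x \<Longrightarrow> x \<le> y \<Longrightarrow> y \<le> pi \<Longrightarrow> cos y \<le> cos x"
  by (rule cos_monotone_0_pi_le) auto

context
  fixes x :: "'a::metric_space"
  assumes cat: "CAT0_ineq TYPE('a)"
begin

lemma alex_range: "g \<in> geods_from x \<Longrightarrow> h \<in> geods_from x \<Longrightarrow> 0 \<le> alex_angle x g h \<and> alex_angle x g h \<le> pi"
  using alex_angle_char(1,2,3)[OF cat, of "fst g" "snd g" x "fst h" "snd h"] by auto

lemma alex_le_cmp: "g \<in> geods_from x \<Longrightarrow> h \<in> geods_from x \<Longrightarrow> s \<in> {0<..fst g} \<Longrightarrow> t \<in> {0<..fst h}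
   \<Longrightarrow> alex_angle x g h \<le> cmp_angle x (snd g s) (snd h t)"
  using alex_angle_char(1,4)[OF cat, of "fst g" "snd g" x "fst h" "snd h"] by auto

lemma alex_approx: "g \<in> geods_from x \<Longrightarrow> h \<in> geods_from x \<Longrightarrow> e > 0 \<Longrightarrow>
  \<exists>s0\<in>{0<..fst g}. \<exists>t0\<in>{0<..fst h}. \<forall>s\<in>{0<..s0}. \<forall>t\<in>{0<..t0}.
            cmp_angle x (snd g s) (snd h t) < alex_angle x g h + e"
  using alex_angle_char(1,5)[OF cat, of "fst g" "snd g" x "fst h" "snd h"] by auto

lemma alex_sym_le: assumes g: "g \<in> geods_from x" and h: "h \<in> geods_from x"
  shows "alex_angle x g h \<le> alex_angle x h g"
proof (rule field_le_epsilon)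
  fix e :: real assume e: "e > 0"
  obtain s0 t0 where st: "s0 \<in> {0<..fst h}" "t0 \<in> {0<..fst g}"
    "\<forall>s\<in>{0<..s0}. \<forall>t\<in>{0<..t0}. cmp_angle x (snd h s) (snd g t) < alex_angle x h g + e"
    using alex_approx[OF h g e] by blast
  have "alex_angle x g h \<le> cmp_angle x (snd g t0) (snd h s0)"
    using st by (intro alex_le_cmp[OF g h]) auto
  also have "\<dots> = cmp_angle x (snd h s0) (snd g t0)" by (rule cmp_angle_sym)
  also have "\<dots> < alex_angle x h g + e" using st by auto
  finally show "alex_angle x g h \<le> alex_angle x h g + e" by simp
qed

lemma alex_sym: "g \<in> geods_from x \<Longrightarrow> h \<in> geods_from x \<Longrightarrow> alex_angle x g h = alex_angle x h g"
  using alex_sym_le[of g h] alex_sym_le[of h g] by auto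

lemma alex_self: assumes g: "g \<in> geods_from x" shows "alex_angle x g g = 0"
proof -
  have l: "fst g > 0" "is_geodesic (snd g) (fst g)" "snd g 0 = x" using g
    by (auto simp: geods_from_def)
  have "alex_angle x g g \<le> cmp_angle x (snd g (fst g)) (snd g (fst g))"
    using l by (intro alex_le_cmp[OF g g]) auto
  also have "\<dots> = 0" using geod_ne[OF l(2,3), of "fst g"] l by (intro cmp_self) auto
  finally show ?thesis using alex_range[OF g g] by simp
qed

lemma alex_tri:
  assumes g: "g \<in> geods_from x" and h: "h \<in> geods_from x" and k: "k \<in> geods_from x"
  shows "alex_angle x g k \<le> alex_angle x g h + alex_angle x h k"
proof (rule ccontr)
  define a where "a = alex_angle x g h"
  define b where "b = alex_angle x h k"
  define c where "c = alex_angle x g k"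
  assume "\<not> c \<le> a + b"
  then have cab: "c > a + b" by (simp add: a_def b_def c_def)
  define \<delta> where "\<delta> = (c - a - b) / 3"
  have \<delta>: "\<delta> > 0" using cab by (simp add: \<delta>_def)
  define a' where "a' = a + \<delta>"
  define b' where "b' = b + \<delta>"
  have ar: "0 \<le> a" "a \<le> pi" using alex_range[OF g h] by (auto simp: a_def)
  have br: "0 \<le> b" "b \<le> pi" using alex_range[OF h k] by (auto simp: b_def)
  have cr: "0 \<le> c" "c \<le> pi" using alex_range[OF g k] by (auto simp: c_def)
  have a'p: "a' > 0" "b' > 0" using ar br \<delta> by (auto simp: a'_def b'_def)
  have abc: "a' + b' < c" using cab unfolding a'_def b'_def \<delta>_def by (simp add: field_simps)
  have abpi: "a' + b' < pi" using abc cr by simp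
  define q where "q = sin (a' + b') / (sin a' + sin b')"
  define lam where "lam = sin a' / (sin a' + sin b')"
  note pl = planar[OF a'p abpi, folded q_def lam_def]
  obtain l1 \<gamma> where gg: "g = (l1, \<gamma>)" by fastforce
  obtain l2 \<eta> where hh: "h = (l2, \<eta>)" by fastforce
  obtain l3 \<kappa> where kk: "k = (l3, \<kappa>)" by fastforce
  have g': "l1 > 0" "is_geodesic \<gamma> l1" "\<gamma> 0 = x" using g by (auto simp: gg geods_from_def)
  have h': "l2 > 0" "is_geodesic \<eta> l2" "\<eta> 0 = x" using h by (auto simp: hh geods_from_def)
  have k': "l3 > 0" "is_geodesic \<kappa> l3" "\<kappa> 0 = x" using k by (auto simp: kk geods_from_def)
  obtain s0 t0 where st0: "s0 \<in> {0<..l1}" "t0 \<in> {0<..l2}"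
    "\<forall>s\<in>{0<..s0}. \<forall>t\<in>{0<..t0}. cmp_angle x (\<gamma> s) (\<eta> t) < a + \<delta>"
    using alex_approx[OF g h \<delta>] by (auto simp: gg hh a_def)
  obtain s1 t1 where st1: "s1 \<in> {0<..l2}" "t1 \<in> {0<..l3}"
    "\<forall>s\<in>{0<..s1}. \<forall>t\<in>{0<..t1}. cmp_angle x (\<eta> s) (\<kappa> t) < b + \<delta>"
    using alex_approx[OF h k \<delta>] by (auto simp: hh kk b_def)
  define r where "r = min (min s0 t1) (min (t0 / q) (s1 / q))"
  have rt: "r \<le> t0/q" "r \<le> s1/q" "r \<le> s0" "r \<le> t1" by (auto simp: r_def)
  have rpos: "r > 0" using st0 st1 pl(1) by (auto simp: r_def)
  have "q * r \<le> q * (t0/q)" "q * r \<le> q * (s1/q)" using rt pl(1) by (intro mult_left_mono; simp)+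
  then have r: "r > 0" "r \<le> s0" "r \<le> t1" "q * r \<le> t0" "q * r \<le> s1"
    using rt rpos pl(1) by auto
  have qr: "q * r > 0" using r pl(1) by simp
  have r1: "r \<le> l1" "r \<le> l3" "q * r \<le> l2" using r st0 st1 by auto
  define S where "S = sqrt (2 - 2 * cos (a' + b'))"
  have S0: "S \<ge> 0" unfolding S_def using cos_le_one[of "a'+b'"] by simp
  have SS: "S\<^sup>2 = 2 - 2 * cos (a' + b')" unfolding S_def using cos_le_one[of "a'+b'"] by simp
  have n1: "\<gamma> r \<noteq> x" "\<eta> (q*r) \<noteq> x" "\<kappa> r \<noteq> x"
    using geod_ne[OF g'(2,3)] geod_ne[OF h'(2,3)] geod_ne[OF k'(2,3)] r r1 qr by auto
  have dg: "dist x (\<gamma> r) = r" using geod_dist0[OF g'(2,3)] r r1 by simp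
  have dh: "dist x (\<eta> (q*r)) = q * r" using geod_dist0[OF h'(2,3)] qr r1 by simp
  have dk: "dist x (\<kappa> r) = r" using geod_dist0[OF k'(2,3)] r r1 by simp
  have c1: "cmp_angle x (\<gamma> r) (\<eta> (q*r)) < a'" using st0(3) r qr by (simp add: a'_def)
  have c2: "cmp_angle x (\<eta> (q*r)) (\<kappa> r) < b'" using st1(3) r qr by (simp add: b'_def)
  have c3: "c \<le> cmp_angle x (\<gamma> r) (\<kappa> r)"
    unfolding c_def using alex_le_cmp[OF g k, of r r] r r1 by (simp add: gg kk)
  have cc1: "cos a' < cos (cmp_angle x (\<gamma> r) (\<eta> (q*r)))"
    using cmp_range[OF n1(1,2)] c1 ar \<delta> abpi a'p by (intro cos_lt_mono) (auto simp: a'_def)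
  have cc2: "cos b' < cos (cmp_angle x (\<eta> (q*r)) (\<kappa> r))"
    using cmp_range[OF n1(2,3)] c2 br \<delta> abpi a'p by (intro cos_lt_mono) (auto simp: b'_def)
  have cc3: "cos (cmp_angle x (\<gamma> r) (\<kappa> r)) < cos (a' + b')"
    using cmp_range[OF n1(1,3)] c3 abc a'p by (intro cos_lt_mono) auto
  have d1: "(dist (\<gamma> r) (\<eta> (q*r)))\<^sup>2 < (r * lam * S)\<^sup>2"
  proof -
    have "(dist (\<gamma> r) (\<eta> (q*r)))\<^sup>2 = r\<^sup>2 + (q*r)\<^sup>2 - 2 * r * (q * r) * cos (cmp_angle x (\<gamma> r) (\<eta> (q*r)))"
      using dist_cmp[OF n1(1,2)] dg dh by simp
    also have "\<dots> < r\<^sup>2 + (q*r)\<^sup>2 - 2 * r * (q * r) * cos a'"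
      using cc1 r qr by (simp add: mult_strict_left_mono)
    also have "\<dots> = r\<^sup>2 * (1 + q\<^sup>2 - 2 * q * cos a')" by (simp add: algebra_simps power2_eq_square)
    also have "\<dots> = (r * lam * S)\<^sup>2" using pl(4) SS by (simp add: power_mult_distrib)
    finally show ?thesis .
  qed
  have d2: "(dist (\<eta> (q*r)) (\<kappa> r))\<^sup>2 < (r * (1 - lam) * S)\<^sup>2"
  proof -
    have "(dist (\<eta> (q*r)) (\<kappa> r))\<^sup>2 = (q*r)\<^sup>2 + r\<^sup>2 - 2 * (q * r) * r * cos (cmp_angle x (\<eta> (q*r)) (\<kappa> r))"
      using dist_cmp[OF n1(2,3)] dk dh by simp
    also have "\<dots> < (q*r)\<^sup>2 + r\<^sup>2 - 2 * (q * r) * r * cos b'"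
      using cc2 r qr by (simp add: mult_strict_left_mono)
    also have "\<dots> = r\<^sup>2 * (q\<^sup>2 + 1 - 2 * q * cos b')" by (simp add: algebra_simps power2_eq_square)
    also have "\<dots> = (r * (1 - lam) * S)\<^sup>2" using pl(5) SS by (simp add: power_mult_distrib)
    finally show ?thesis .
  qed
  have d3: "(r * S)\<^sup>2 < (dist (\<gamma> r) (\<kappa> r))\<^sup>2"
  proof -
    have "(r * S)\<^sup>2 = r\<^sup>2 * S\<^sup>2" by (simp add: power_mult_distrib)
    also have "\<dots> = r\<^sup>2 + r\<^sup>2 - 2 * r * r * cos (a' + b')" unfolding SS by (simp add: algebra_simps power2_eq_square)
    also have "\<dots> < r\<^sup>2 + r\<^sup>2 - 2 * r * r * cos (cmp_angle x (\<gamma> r) (\<kappa> r))"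
      using cc3 r by (simp add: mult_strict_left_mono)
    also have "\<dots> = (dist (\<gamma> r) (\<kappa> r))\<^sup>2" using dist_cmp[OF n1(1,3)] dg dk by simp
    finally show ?thesis .
  qed
  have e1: "dist (\<gamma> r) (\<eta> (q*r)) < r * lam * S"
  proof (rule power_less_imp_less_base[OF d1])
    show "0 \<le> r * lam * S" using r(1) pl(2) S0 by simp
  qed
  have e2: "dist (\<eta> (q*r)) (\<kappa> r) < r * (1 - lam) * S"
  proof (rule power_less_imp_less_base[OF d2])
    show "0 \<le> r * (1 - lam) * S" using r(1) pl(3) S0 by simp
  qed
  have e3: "r * S < dist (\<gamma> r) (\<kappa> r)"
    by (rule power_less_imp_less_base[OF d3]) simp
  have "dist (\<gamma> r) (\<kappa> r) \<le> dist (\<gamma> r) (\<eta> (q*r)) + dist (\<eta> (q*r)) (\<kappa> r)" by (rule dist_triangle)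
  also have "\<dots> < r * lam * S + r * (1 - lam) * S" using e1 e2 by simp
  also have "\<dots> = r * S" by (simp add: algebra_simps)
  finally show False using e3 by simp
qed

end

context
  fixes x :: "'a::metric_space"
  assumes cat: "CAT0_ineq TYPE('a)"
begin

lemma dir_seqsD: "\<sigma> \<in> dir_seqs x \<Longrightarrow> \<sigma> n \<in> geods_from x"
  by (simp add: dir_seqs_def)

lemma dir_seqs_cauchy: "\<sigma> \<in> dir_seqs x \<Longrightarrow> e > 0 \<Longrightarrow> \<exists>N. \<forall>m\<ge>N. \<forall>n\<ge>N. alex_angle x (\<sigma> m) (\<sigma> n) < e"
  by (simp add: dir_seqs_def)

lemma alex_diff:
  assumes "g \<in> geods_from x" "g' \<in> geods_from x" "h \<in> geods_from x" "h' \<in> geods_from x"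
  shows "\<bar>alex_angle x g h - alex_angle x g' h'\<bar> \<le> alex_angle x g g' + alex_angle x h h'"
proof -
  have "alex_angle x g h \<le> alex_angle x g g' + alex_angle x g' h" by (rule alex_tri[OF cat assms(1,2,3)])
  moreover have "alex_angle x g' h \<le> alex_angle x g' h' + alex_angle x h' h" by (rule alex_tri[OF cat assms(2,4,3)])
  moreover have "alex_angle x g' h' \<le> alex_angle x g' g + alex_angle x g h'" by (rule alex_tri[OF cat assms(2,1,4)])
  moreover have "alex_angle x g h' \<le> alex_angle x g h + alex_angle x h h'" by (rule alex_tri[OF cat assms(1,3,4)])
  moreover have "alex_angle x h' h = alex_angle x h h'" "alex_angle x g' g = alex_angle x g g'"
    using alex_sym[OF cat] assms by auto
  ultimately show ?thesis by linarith
qed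

lemma seq_conv:
  assumes s: "\<sigma> \<in> dir_seqs x" and t: "\<tau> \<in> dir_seqs x"
  shows "(\<lambda>n. alex_angle x (\<sigma> n) (\<tau> n)) \<longlonglongrightarrow> seq_angle x \<sigma> \<tau>"
proof -
  have "Cauchy (\<lambda>n. alex_angle x (\<sigma> n) (\<tau> n))"
  proof (rule CauchyI)
    fix e :: real assume e: "e > 0"
    obtain N1 where N1: "\<forall>m\<ge>N1. \<forall>n\<ge>N1. alex_angle x (\<sigma> m) (\<sigma> n) < e/2"
      using dir_seqs_cauchy[OF s, of "e/2"] e by auto
    obtain N2 where N2: "\<forall>m\<ge>N2. \<forall>n\<ge>N2. alex_angle x (\<tau> m) (\<tau> n) < e/2"
      using dir_seqs_cauchy[OF t, of "e/2"] e by auto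
    show "\<exists>M. \<forall>m\<ge>M. \<forall>n\<ge>M. norm (alex_angle x (\<sigma> m) (\<tau> m) - alex_angle x (\<sigma> n) (\<tau> n)) < e"
    proof (intro exI allI impI)
      fix m n assume "max N1 N2 \<le> m" "max N1 N2 \<le> n"
      then have "alex_angle x (\<sigma> m) (\<sigma> n) < e/2" "alex_angle x (\<tau> m) (\<tau> n) < e/2" using N1 N2 by auto
      then show "norm (alex_angle x (\<sigma> m) (\<tau> m) - alex_angle x (\<sigma> n) (\<tau> n)) < e"
        using alex_diff[OF dir_seqsD[OF s, of m] dir_seqsD[OF s, of n] dir_seqsD[OF t, of m] dir_seqsD[OF t, of n]]
        by simp
    qed
  qed
  then show ?thesis unfolding seq_angle_def Cauchy_convergent_iff convergent_LIMSEQ_iff .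
qed

lemma seq_range: assumes s: "\<sigma> \<in> dir_seqs x" and t: "\<tau> \<in> dir_seqs x"
  shows "0 \<le> seq_angle x \<sigma> \<tau> \<and> seq_angle x \<sigma> \<tau> \<le> pi"
proof -
  have r: "0 \<le> alex_angle x (\<sigma> n) (\<tau> n)" "alex_angle x (\<sigma> n) (\<tau> n) \<le> pi" for n
    using alex_range[OF cat dir_seqsD[OF s, of n] dir_seqsD[OF t, of n]] by auto
  show ?thesis using LIMSEQ_le_const[OF seq_conv[OF s t]] LIMSEQ_le_const2[OF seq_conv[OF s t]] r by auto
qed

lemma seq_sym: assumes s: "\<sigma> \<in> dir_seqs x" and t: "\<tau> \<in> dir_seqs x"
  shows "seq_angle x \<sigma> \<tau> = seq_angle x \<tau> \<sigma>"
proof -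
  have "alex_angle x (\<sigma> n) (\<tau> n) = alex_angle x (\<tau> n) (\<sigma> n)" for n
    using alex_sym[OF cat dir_seqsD[OF s, of n] dir_seqsD[OF t, of n]] .
  then show ?thesis using LIMSEQ_unique[OF seq_conv[OF s t]] seq_conv[OF t s] by simp
qed

lemma seq_self: "\<sigma> \<in> dir_seqs x \<Longrightarrow> seq_angle x \<sigma> \<sigma> = 0"
  unfolding seq_angle_def using alex_self[OF cat dir_seqsD] by simp

lemma seq_tri: assumes "\<sigma> \<in> dir_seqs x" "\<tau> \<in> dir_seqs x" "\<rho> \<in> dir_seqs x"
  shows "seq_angle x \<sigma> \<rho> \<le> seq_angle x \<sigma> \<tau> + seq_angle x \<tau> \<rho>"
  by (rule LIMSEQ_le[OF seq_conv[OF assms(1,3)] tendsto_add[OF seq_conv[OF assms(1,2)] seq_conv[OF assms(2,3)]]])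
     (use alex_tri[OF cat dir_seqsD[OF assms(1)] dir_seqsD[OF assms(2)] dir_seqsD[OF assms(3)]] in auto)

lemma const_dir: "g \<in> geods_from x \<Longrightarrow> (\<lambda>n. g) \<in> dir_seqs x"
  unfolding dir_seqs_def using alex_self[OF cat] by auto

lemma seq_const: "g \<in> geods_from x \<Longrightarrow> h \<in> geods_from x \<Longrightarrow> seq_angle x (\<lambda>n. g) (\<lambda>n. h) = alex_angle x g h"
  unfolding seq_angle_def by simp

end

definition rp :: "'a tvec \<Rightarrow> 'a trep" where "rp U = (SOME u. u \<in> U)"

lemma treps_iff: "(t, \<sigma>) \<in> treps x \<longleftrightarrow> t = 0 \<or> (t > 0 \<and> \<sigma> \<in> dir_seqs x)"
  by (simp add: treps_def)

lemma treps_fst: "v \<in> treps x \<Longrightarrow> fst v \<ge> 0"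
  by (auto simp: treps_def)

lemma treps_snd: "v \<in> treps x \<Longrightarrow> fst v > 0 \<Longrightarrow> snd v \<in> dir_seqs x"
  by (auto simp: treps_def)

lemma rep_dist_z1: "fst v = 0 \<Longrightarrow> w \<in> treps x \<Longrightarrow> rep_dist x v w = fst w"
  using treps_fst[of w x] by (simp add: rep_dist_def)

lemma rep_dist_z2: "fst w = 0 \<Longrightarrow> v \<in> treps x \<Longrightarrow> rep_dist x v w = fst v"
  using treps_fst[of v x] by (simp add: rep_dist_def)

lemma rep_inner_z1: "fst v = 0 \<Longrightarrow> rep_inner x v w = 0"
  and rep_inner_z2: "fst w = 0 \<Longrightarrow> rep_inner x v w = 0"
  by (simp_all add: rep_inner_def)

context
  fixes x :: "'a::metric_space"
  assumes cat: "CAT0_ineq TYPE('a)"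
begin

lemma rep_dist_self: "v \<in> treps x \<Longrightarrow> rep_dist x v v = 0"
proof -
  assume v: "v \<in> treps x"
  show ?thesis
  proof (cases "fst v = 0")
    case True then show ?thesis using rep_dist_z1[OF True v] by simp
  next
    case False
    then have "fst v > 0" using treps_fst[OF v] by simp
    then have "seq_angle x (snd v) (snd v) = 0" using seq_self[OF cat treps_snd[OF v]] by simp
    then show ?thesis by (simp add: rep_dist_def power2_eq_square)
  qed
qed

lemma rep_equiv:
  assumes v: "v \<in> treps x" and w: "w \<in> treps x" and d: "rep_dist x v w = 0"
  shows "fst v = fst w" "fst v > 0 \<Longrightarrow> seq_angle x (snd v) (snd w) = 0"
proof -
  have "fst v = fst w \<and> (fst v > 0 \<longrightarrow> seq_angle x (snd v) (snd w) = 0)"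
  proof (cases "fst v = 0")
    case True then show ?thesis using rep_dist_z1[OF True w] d by simp
  next
    case False
    then have t: "fst v > 0" using treps_fst[OF v] by simp
    show ?thesis
    proof (cases "fst w = 0")
      case True then show ?thesis using rep_dist_z2[OF True v] d by simp
    next
      case False
      then have s: "fst w > 0" using treps_fst[OF w] by simp
      define \<theta> where "\<theta> = seq_angle x (snd v) (snd w)"
      have th: "0 \<le> \<theta>" "\<theta> \<le> pi" using seq_range[OF cat treps_snd[OF v t] treps_snd[OF w s]] by (auto simp: \<theta>_def)
      define E where "E = (fst v)\<^sup>2 + (fst w)\<^sup>2 - 2 * fst v * fst w * cos \<theta>"
      have E: "E = (fst v - fst w)\<^sup>2 + 2 * fst v * fst w * (1 - cos \<theta>)"
        by (simp add: E_def power2_eq_square algebra_simps)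
      have c1: "1 - cos \<theta> \<ge> 0" by simp
      have p1: "2 * fst v * fst w * (1 - cos \<theta>) \<ge> 0" using t s c1 by simp
      have E0: "E \<ge> 0" using E p1 by (metis add_nonneg_nonneg zero_le_power2)
      have "sqrt E = 0" using d by (simp add: rep_dist_def E_def \<theta>_def)
      then have "E = 0" using E0 by simp
      then have a: "(fst v - fst w)\<^sup>2 = 0" and b: "2 * fst v * fst w * (1 - cos \<theta>) = 0"
        using E p1 by (metis add_nonneg_eq_0_iff zero_le_power2)+
      from b t s have "cos \<theta> = 1" by simp
      then have "\<theta> = 0" using arccos_cos[OF th] by simp
      then show ?thesis using a by (simp add: \<theta>_def)
    qed
  qed
  then show "fst v = fst w" "fst v > 0 \<Longrightarrow> seq_angle x (snd v) (snd w) = 0" by auto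
qed

lemma rep_equiv_inv:
  assumes v: "v \<in> treps x" and w: "w \<in> treps x" and z: "z \<in> treps x" and d: "rep_dist x v w = 0"
  shows "rep_dist x v z = rep_dist x w z" "rep_inner x v z = rep_inner x w z"
proof -
  note e = rep_equiv[OF v w d]
  have "rep_dist x v z = rep_dist x w z \<and> rep_inner x v z = rep_inner x w z"
  proof (cases "fst v = 0")
    case True
    then show ?thesis using e rep_dist_z1[OF True z] rep_dist_z1[of w z] z
      by (simp add: rep_inner_def)
  next
    case False
    then have t: "fst v > 0" using treps_fst[OF v] by simp
    show ?thesis
    proof (cases "fst z = 0")
      case True then show ?thesis using rep_dist_z2[OF True v] rep_dist_z2[OF True w] e
        by (simp add: rep_inner_def)
    next
      case False
      then have s: "fst z > 0" using treps_fst[OF z] by simp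
      have sv: "snd v \<in> dir_seqs x" and sw: "snd w \<in> dir_seqs x" and sz: "snd z \<in> dir_seqs x"
        using treps_snd[OF v t] treps_snd[OF w] treps_snd[OF z s] e t by auto
      have "seq_angle x (snd v) (snd z) \<le> seq_angle x (snd v) (snd w) + seq_angle x (snd w) (snd z)"
        by (rule seq_tri[OF cat sv sw sz])
      moreover have "seq_angle x (snd w) (snd z) \<le> seq_angle x (snd w) (snd v) + seq_angle x (snd v) (snd z)"
        by (rule seq_tri[OF cat sw sv sz])
      moreover have "seq_angle x (snd w) (snd v) = seq_angle x (snd v) (snd w)" by (rule seq_sym[OF cat sw sv])
      ultimately have "seq_angle x (snd v) (snd z) = seq_angle x (snd w) (snd z)" using e(2)[OF t] by simp
      then show ?thesis using e by (simp add: rep_dist_def rep_inner_def)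
    qed
  qed
  then show "rep_dist x v z = rep_dist x w z" "rep_inner x v z = rep_inner x w z" by auto
qed

lemma rep_inner_sym: "v \<in> treps x \<Longrightarrow> w \<in> treps x \<Longrightarrow> rep_inner x v w = rep_inner x w v"
proof -
  assume v: "v \<in> treps x" and w: "w \<in> treps x"
  show ?thesis
  proof (cases "fst v > 0 \<and> fst w > 0")
    case True then show ?thesis using seq_sym[OF cat treps_snd[OF v] treps_snd[OF w]]
      by (simp add: rep_inner_def)
  next
    case False then have "fst v = 0 \<or> fst w = 0" using treps_fst[OF v] treps_fst[OF w] by auto
    then show ?thesis by (auto simp: rep_inner_def)
  qed
qed

lemma rep_dist_sym: "v \<in> treps x \<Longrightarrow> w \<in> treps x \<Longrightarrow> rep_dist x v w = rep_dist x w v"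
proof -
  assume v: "v \<in> treps x" and w: "w \<in> treps x"
  show ?thesis
  proof (cases "fst v > 0 \<and> fst w > 0")
    case True then show ?thesis using seq_sym[OF cat treps_snd[OF v] treps_snd[OF w]]
      by (simp add: rep_dist_def add_ac mult_ac)
  next
    case False then have "fst v = 0 \<or> fst w = 0" using treps_fst[OF v] treps_fst[OF w] by auto
    then show ?thesis using rep_dist_z1 rep_dist_z2 v w by metis
  qed
qed

lemma tclass_self: "v \<in> treps x \<Longrightarrow> v \<in> tclass x v"
  using rep_dist_self by (simp add: tclass_def)

lemma rp_tclass: assumes v: "v \<in> treps x"
  shows "rp (tclass x v) \<in> treps x" "rep_dist x v (rp (tclass x v)) = 0"
proof -
  have "rp (tclass x v) \<in> tclass x v" unfolding rp_def using tclass_self[OF v] by (rule someI)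
  then show "rp (tclass x v) \<in> treps x" "rep_dist x v (rp (tclass x v)) = 0" by (auto simp: tclass_def)
qed

lemma tclass_eq: assumes v: "v \<in> treps x" and w: "w \<in> treps x" and d: "rep_dist x v w = 0"
  shows "tclass x v = tclass x w"
  unfolding tclass_def using rep_equiv_inv(1)[OF v w _ d] by auto

lemma tinner_class: assumes v: "v \<in> treps x" and w: "w \<in> treps x"
  shows "tinner x (tclass x v) (tclass x w) = rep_inner x v w"
proof -
  note a = rp_tclass[OF v] and b = rp_tclass[OF w]
  have "tinner x (tclass x v) (tclass x w) = rep_inner x (rp (tclass x v)) (rp (tclass x w))"
    by (simp add: tinner_def rp_def)
  also have "\<dots> = rep_inner x v (rp (tclass x w))" using rep_equiv_inv(2)[OF v a(1) b(1) a(2)] by simp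
  also have "\<dots> = rep_inner x (rp (tclass x w)) v" using rep_inner_sym[OF v b(1)] .
  also have "\<dots> = rep_inner x w v" using rep_equiv_inv(2)[OF w b(1) v b(2)] by simp
  also have "\<dots> = rep_inner x v w" using rep_inner_sym[OF w v] .
  finally show ?thesis .
qed

lemma tdist_class: assumes v: "v \<in> treps x" and w: "w \<in> treps x"
  shows "tdist x (tclass x v) (tclass x w) = rep_dist x v w"
proof -
  note a = rp_tclass[OF v] and b = rp_tclass[OF w]
  have "tdist x (tclass x v) (tclass x w) = rep_dist x (rp (tclass x v)) (rp (tclass x w))"
    by (simp add: tdist_def rp_def)
  also have "\<dots> = rep_dist x v (rp (tclass x w))" using rep_equiv_inv(1)[OF v a(1) b(1) a(2)] by simp
  also have "\<dots> = rep_dist x (rp (tclass x w)) v" using rep_dist_sym[OF v b(1)] .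
  also have "\<dots> = rep_dist x w v" using rep_equiv_inv(1)[OF w b(1) v b(2)] by simp
  also have "\<dots> = rep_dist x v w" using rep_dist_sym[OF w v] .
  finally show ?thesis .
qed

lemma tnorm_class: assumes v: "v \<in> treps x" shows "tnorm x (tclass x v) = fst v"
  using rep_equiv(1)[OF v rp_tclass[OF v]] by (simp add: tnorm_def rp_def)

lemma tscale_class: assumes v: "v \<in> treps x" and c: "c > 0"
  shows "tscale x c (tclass x v) = tclass x (c * fst v, snd v)"
proof -
  note a = rp_tclass[OF v]
  let ?u = "rp (tclass x v)"
  have f: "fst ?u = fst v" using rep_equiv(1)[OF v a] by simp
  have m1: "(c * fst v, snd v) \<in> treps x" using v c treps_fst[OF v] treps_snd[OF v]
    by (cases "fst v = 0") (auto simp: treps_iff)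
  have m2: "(c * fst v, snd ?u) \<in> treps x" using a(1) c f treps_fst[OF v] treps_snd[OF a(1)]
    by (cases "fst v = 0") (auto simp: treps_iff)
  have "rep_dist x (c * fst v, snd v) (c * fst v, snd ?u) = 0"
  proof (cases "fst v = 0")
    case True then show ?thesis by (simp add: rep_dist_def)
  next
    case False
    then have "fst v > 0" using treps_fst[OF v] by simp
    then have "seq_angle x (snd v) (snd ?u) = 0" using rep_equiv(2)[OF v a] by simp
    then show ?thesis by (simp add: rep_dist_def power2_eq_square)
  qed
  then have "tclass x (c * fst v, snd v) = tclass x (c * fst v, snd ?u)" by (rule tclass_eq[OF m1 m2])
  then show ?thesis unfolding tscale_def Let_def rp_def[symmetric] using f by simp
qed

lemma tangent_rp: assumes U: "U \<in> tangent_space x"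
  shows "rp U \<in> treps x" "U = tclass x (rp U)"
proof -
  obtain v where v: "v \<in> treps x" "U = tclass x v" using U by (auto simp: tangent_space_def)
  note a = rp_tclass[OF v(1)]
  show "rp U \<in> treps x" using a v by simp
  show "U = tclass x (rp U)" using tclass_eq[OF v(1) a] v by simp
qed

end

lemma planar_proj:
  fixes t s th1 th2 ph :: real
  assumes "0 \<le> t" "0 \<le> s" "0 \<le> th1" "th1 \<le> pi" "0 \<le> th2" "th2 \<le> pi" "ph \<le> pi"
    and "\<bar>th1 - th2\<bar> \<le> ph"
  shows "\<bar>t * cos th1 - s * cos th2\<bar> \<le> sqrt (t\<^sup>2 + s\<^sup>2 - 2 * t * s * cos ph)"
proof -
  have id: "(t * cos th1 - s * cos th2)\<^sup>2 + (t * sin th1 - s * sin th2)\<^sup>2 = t\<^sup>2 + s\<^sup>2 - 2 * t * s * cos (th1 - th2)"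
  proof -
    have "(t * cos th1 - s * cos th2)\<^sup>2 + (t * sin th1 - s * sin th2)\<^sup>2 =
        t\<^sup>2 * ((sin th1)\<^sup>2 + (cos th1)\<^sup>2) + s\<^sup>2 * ((sin th2)\<^sup>2 + (cos th2)\<^sup>2) - 2 * t * s * (cos th1 * cos th2 + sin th1 * sin th2)"
      by algebra
    then show ?thesis by (simp add: cos_diff)
  qed
  have "cos (th1 - th2) = cos \<bar>th1 - th2\<bar>" by (metis cos_abs_real)
  also have "\<dots> \<ge> cos ph" using assms by (intro cos_le_mono) auto
  finally have c: "cos ph \<le> cos (th1 - th2)" .
  have "2 * t * s * cos ph \<le> 2 * t * s * cos (th1 - th2)" using c assms by (simp add: mult_left_mono)
  then have "(t * cos th1 - s * cos th2)\<^sup>2 \<le> t\<^sup>2 + s\<^sup>2 - 2 * t * s * cos ph"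
    using id by (smt (verit) zero_le_power2)
  then have "sqrt ((t * cos th1 - s * cos th2)\<^sup>2) \<le> sqrt (t\<^sup>2 + s\<^sup>2 - 2 * t * s * cos ph)"
    by (rule real_sqrt_le_mono)
  then show ?thesis by simp
qed

context
  fixes x :: "'a::metric_space"
  assumes cat: "CAT0_ineq TYPE('a)"
begin

lemma rep_dist_nonneg: "v \<in> treps x \<Longrightarrow> w \<in> treps x \<Longrightarrow> rep_dist x v w \<ge> 0"
proof -
  assume v: "v \<in> treps x" and w: "w \<in> treps x"
  define th where "th = seq_angle x (snd v) (snd w)"
  have c: "cos th \<le> 1" by simp
  have p: "0 \<le> 2 * fst v * fst w" using treps_fst[OF v] treps_fst[OF w] by simp
  have m: "2 * fst v * fst w * cos th \<le> 2 * fst v * fst w" using mult_left_mono[OF c p] by simp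
  have sq: "(fst v - fst w)\<^sup>2 = (fst v)\<^sup>2 + (fst w)\<^sup>2 - 2 * fst v * fst w" by (simp add: power2_eq_square algebra_simps)
  have "0 \<le> (fst v - fst w)\<^sup>2" by simp
  then have "0 \<le> (fst v)\<^sup>2 + (fst w)\<^sup>2 - 2 * fst v * fst w * cos th" using sq m by linarith
  then show ?thesis by (simp add: rep_dist_def th_def)
qed

lemma rep_inner_lip:
  assumes u: "u \<in> treps x" and v: "v \<in> treps x" and w: "w \<in> treps x"
  shows "\<bar>rep_inner x u v - rep_inner x u w\<bar> \<le> fst u * rep_dist x v w"
proof -
  have fu: "fst u \<ge> 0" using treps_fst[OF u] .
  show ?thesis
  proof (cases "fst u = 0")
    case True then show ?thesis by (simp add: rep_inner_def)
  next
    case False then have up: "fst u > 0" using fu by simp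
    show ?thesis
    proof (cases "fst v = 0")
      case True
      have "\<bar>rep_inner x u w\<bar> \<le> fst u * fst w"
        using fu treps_fst[OF w] abs_cos_le_one[of "seq_angle x (snd u) (snd w)"]
        by (simp add: rep_inner_def abs_mult mult_left_le)
      then show ?thesis using rep_dist_z1[OF True w] by (simp add: rep_inner_def True)
    next
      case False then have vp: "fst v > 0" using treps_fst[OF v] by simp
      show ?thesis
      proof (cases "fst w = 0")
        case True
        have "\<bar>rep_inner x u v\<bar> \<le> fst u * fst v"
          using fu treps_fst[OF v] abs_cos_le_one[of "seq_angle x (snd u) (snd v)"]
          by (simp add: rep_inner_def abs_mult mult_left_le)
        then show ?thesis using rep_dist_z2[OF True v] by (simp add: rep_inner_def True)
      next
        case False then have wp: "fst w > 0" using treps_fst[OF w] by simp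
        have su: "snd u \<in> dir_seqs x" and sv: "snd v \<in> dir_seqs x" and sw: "snd w \<in> dir_seqs x"
          using treps_snd[OF u up] treps_snd[OF v vp] treps_snd[OF w wp] by auto
        define th1 where "th1 = seq_angle x (snd u) (snd v)"
        define th2 where "th2 = seq_angle x (snd u) (snd w)"
        define ph where "ph = seq_angle x (snd v) (snd w)"
        have r1: "0 \<le> th1" "th1 \<le> pi" using seq_range[OF cat su sv] by (auto simp: th1_def)
        have r2: "0 \<le> th2" "th2 \<le> pi" using seq_range[OF cat su sw] by (auto simp: th2_def)
        have r3: "ph \<le> pi" using seq_range[OF cat sv sw] by (auto simp: ph_def)
        have "th2 \<le> th1 + ph" unfolding th1_def th2_def ph_def by (rule seq_tri[OF cat su sv sw])
        moreover have "th1 \<le> th2 + seq_angle x (snd w) (snd v)" unfolding th1_def th2_def by (rule seq_tri[OF cat su sw sv])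
        moreover have "seq_angle x (snd w) (snd v) = ph" unfolding ph_def by (rule seq_sym[OF cat sw sv])
        ultimately have "\<bar>th1 - th2\<bar> \<le> ph" by simp
        then have "\<bar>fst v * cos th1 - fst w * cos th2\<bar> \<le> sqrt ((fst v)\<^sup>2 + (fst w)\<^sup>2 - 2 * fst v * fst w * cos ph)"
          using r1 r2 r3 vp wp by (intro planar_proj) auto
        then have "fst u * \<bar>fst v * cos th1 - fst w * cos th2\<bar> \<le> fst u * rep_dist x v w"
          using fu by (simp add: rep_dist_def ph_def mult_left_mono)
        moreover have "rep_inner x u v - rep_inner x u w = fst u * (fst v * cos th1 - fst w * cos th2)"
          by (simp add: rep_inner_def th1_def th2_def algebra_simps)
        ultimately show ?thesis using fu by (simp add: abs_mult)
      qed
    qed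
  qed
qed

lemma rep_inner_bound: "u \<in> treps x \<Longrightarrow> v \<in> treps x \<Longrightarrow> \<bar>rep_inner x u v\<bar> \<le> fst u * fst v"
  using treps_fst[of u x] treps_fst[of v x] abs_cos_le_one[of "seq_angle x (snd u) (snd v)"]
  by (simp add: rep_inner_def abs_mult mult_left_le)

lemma tinner_lip:
  assumes U: "U \<in> tangent_space x" and V: "V \<in> tangent_space x" and W: "W \<in> tangent_space x"
  shows "\<bar>tinner x U V - tinner x W V\<bar> \<le> tnorm x V * tdist x U W"
proof -
  have a: "rp U \<in> treps x" "rp V \<in> treps x" "rp W \<in> treps x" using tangent_rp[OF cat] U V W by auto
  have "tinner x U V = rep_inner x (rp V) (rp U)" unfolding tinner_def rp_def[symmetric]
    using rep_inner_sym[OF cat a(1,2)] by simp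
  moreover have "tinner x W V = rep_inner x (rp V) (rp W)" unfolding tinner_def rp_def[symmetric]
    using rep_inner_sym[OF cat a(3,2)] by simp
  moreover have "tnorm x V = fst (rp V)" "tdist x U W = rep_dist x (rp U) (rp W)"
    by (simp_all add: tnorm_def tdist_def rp_def)
  ultimately show ?thesis using rep_inner_lip[OF a(2,1,3)] by simp
qed

lemma tnorm_nonneg: assumes U: "U \<in> tangent_space x" shows "tnorm x U \<ge> 0"
  using treps_fst[OF tangent_rp(1)[OF cat U]] by (simp add: tnorm_def rp_def[symmetric])

lemma tzero_treps: "(0, undefined) \<in> treps x" by (simp add: treps_iff)

lemma tdist_zero: assumes U: "U \<in> tangent_space x" shows "tdist x U (tzero x) = tnorm x U"
proof -
  have a: "rp U \<in> treps x" using tangent_rp[OF cat U] by simp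
  have z: "fst (rp (tzero x)) = 0" using rep_equiv(1)[OF cat tzero_treps rp_tclass[OF cat tzero_treps]]
    by (simp add: tzero_def)
  show ?thesis unfolding tdist_def tnorm_def rp_def[symmetric] using rep_dist_z2[OF z a] .
qed

end

definition lv :: "'a::metric_space \<Rightarrow> 'a \<Rightarrow> 'a trep" where
  "lv p a = (if a = p then (0, undefined) else (dist p a, \<lambda>n. (dist p a, geod_seg p a)))"

lemma fst_lv: "fst (lv p a) = dist p a" by (simp add: lv_def)

lemma tlog_lv: "tlog p a = tclass p (lv p a)"
  by (simp add: tlog_def lv_def tzero_def)

context
  fixes p :: "'a::metric_space"
  assumes had: "hadamard_space TYPE('a)"
begin

lemma cat: "CAT0_ineq TYPE('a)" using had_cat0[OF had] .

lemma ga_geod: "a \<noteq> p \<Longrightarrow> (dist p a, geod_seg p a) \<in> geods_from p"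
  using geod_seg_props[OF had, of p a] by (simp add: geods_from_def)

lemma lv_treps: "lv p a \<in> treps p"
  using const_dir[OF cat ga_geod] by (simp add: lv_def treps_iff)

lemma tlog_tangent: "tlog p a \<in> tangent_space p"
  unfolding tlog_lv tangent_space_def using lv_treps by simp

lemma rep_inner_lv_ge:
  "(dist p a)\<^sup>2 + (dist p b)\<^sup>2 - (dist a b)\<^sup>2 \<le> 2 * rep_inner p (lv p a) (lv p b)"
proof (cases "a = p \<or> b = p")
  case True then show ?thesis by (auto simp: lv_def rep_inner_def dist_commute)
next
  case False
  then have a: "a \<noteq> p" and b: "b \<noteq> p" by auto
  let ?ga = "(dist p a, geod_seg p a)" and ?gb = "(dist p b, geod_seg p b)"
  have da: "dist p a > 0" and db: "dist p b > 0" using a b by auto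
  have sa: "geod_seg p a (dist p a) = a" and sb: "geod_seg p b (dist p b) = b"
    using geod_seg_props[OF had] by auto
  have "alex_angle p ?ga ?gb \<le> cmp_angle p (geod_seg p a (dist p a)) (geod_seg p b (dist p b))"
    using alex_le_cmp[OF cat ga_geod[OF a] ga_geod[OF b], of "dist p a" "dist p b"] da db by simp
  then have le: "alex_angle p ?ga ?gb \<le> cmp_angle p a b" using sa sb by simp
  have "cos (cmp_angle p a b) \<le> cos (alex_angle p ?ga ?gb)"
    using le alex_range[OF cat ga_geod[OF a] ga_geod[OF b]] cmp_range[OF a b] by (intro cos_le_mono) auto
  then have "ccos p a b \<le> cos (alex_angle p ?ga ?gb)" using cos_cmp[OF a b] by simp
  then have "2 * dist p a * dist p b * ccos p a b \<le> 2 * dist p a * dist p b * cos (alex_angle p ?ga ?gb)"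
    using da db by (intro mult_left_mono) auto
  moreover have "2 * dist p a * dist p b * ccos p a b = (dist p a)\<^sup>2 + (dist p b)\<^sup>2 - (dist a b)\<^sup>2"
    unfolding ccos_def using da db by simp
  moreover have "rep_inner p (lv p a) (lv p b) = dist p a * dist p b * cos (alex_angle p ?ga ?gb)"
    using a b seq_const[OF cat ga_geod[OF a] ga_geod[OF b]] by (simp add: lv_def rep_inner_def)
  ultimately show ?thesis by simp
qed

lemma rep_dist_lv_le: "rep_dist p (lv p a) (lv p b) \<le> dist a b"
proof (cases "a = p \<or> b = p")
  case True
  then show ?thesis
  proof
    assume "a = p"
    then show ?thesis using rep_dist_z1[of "lv p a" "lv p b" p] lv_treps by (simp add: fst_lv lv_def)
  next
    assume "b = p"
    then show ?thesis using rep_dist_z2[of "lv p b" "lv p a" p] lv_treps by (simp add: fst_lv lv_def dist_commute)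
  qed
next
  case False
  then have a: "a \<noteq> p" and b: "b \<noteq> p" by auto
  have "(dist p a)\<^sup>2 + (dist p b)\<^sup>2 - 2 * rep_inner p (lv p a) (lv p b) \<le> (dist a b)\<^sup>2"
    using rep_inner_lv_ge[of a b] by simp
  moreover have "rep_dist p (lv p a) (lv p b) = sqrt ((dist p a)\<^sup>2 + (dist p b)\<^sup>2 - 2 * rep_inner p (lv p a) (lv p b))"
    using a b by (simp add: lv_def rep_dist_def rep_inner_def mult_ac)
  ultimately have "rep_dist p (lv p a) (lv p b) \<le> sqrt ((dist a b)\<^sup>2)" using real_sqrt_le_mono by presburger
  then show ?thesis by simp
qed

lemma scale_treps: "v \<in> treps p \<Longrightarrow> c > 0 \<Longrightarrow> (c * fst v, snd v) \<in> treps p"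
  using treps_fst[of v p] treps_snd[of v p] by (cases "fst v = 0") (auto simp: treps_iff)

lemma tscale_log: "c > 0 \<Longrightarrow> tscale p c (tlog p a) = tclass p (c * dist p a, snd (lv p a))"
  unfolding tlog_lv using tscale_class[OF cat lv_treps] by (simp add: fst_lv)

lemma tscale_log_tangent: "c > 0 \<Longrightarrow> tscale p c (tlog p a) \<in> tangent_space p"
  unfolding tscale_log tangent_space_def using scale_treps[OF lv_treps, of c a] by (simp add: fst_lv)

lemma tnorm_scale_log: "c > 0 \<Longrightarrow> tnorm p (tscale p c (tlog p a)) = c * dist p a"
  unfolding tscale_log using tnorm_class[OF cat scale_treps[OF lv_treps, of c a]] by (simp add: fst_lv)

lemma law_cos:
  assumes c: "c > 0"
  shows "c * ((dist p a)\<^sup>2 + (dist p b)\<^sup>2 - (dist a b)\<^sup>2) \<le> 2 * tinner p (tscale p c (tlog p a)) (tlog p b)"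
proof -
  have "tinner p (tscale p c (tlog p a)) (tlog p b) = rep_inner p (c * dist p a, snd (lv p a)) (lv p b)"
    unfolding tscale_log[OF c] tlog_lv[of p b]
    using tinner_class[OF cat scale_treps[OF lv_treps c, of a] lv_treps] by (simp add: fst_lv)
  also have "\<dots> = c * rep_inner p (lv p a) (lv p b)" by (simp add: rep_inner_def fst_lv)
  finally show ?thesis using rep_inner_lv_ge[of a b] c by (simp add: mult_left_mono)
qed

lemma tinner_log_bound:
  assumes U: "U \<in> tangent_space p"
  shows "\<bar>tinner p U (tlog p a)\<bar> \<le> tnorm p U * dist p a"
proof -
  have u: "rp U \<in> treps p" "U = tclass p (rp U)" using tangent_rp[OF cat U] by auto
  have "tinner p U (tlog p a) = rep_inner p (rp U) (lv p a)"
    unfolding tlog_lv using tinner_class[OF cat u(1) lv_treps] u(2) by metis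
  moreover have "tnorm p U = fst (rp U)" by (simp add: tnorm_def rp_def)
  ultimately show ?thesis using rep_inner_bound[OF cat u(1) lv_treps] by (simp add: fst_lv)
qed

lemma tinner_log_lip:
  assumes U: "U \<in> tangent_space p"
  shows "\<bar>tinner p U (tlog p a) - tinner p U (tlog p b)\<bar> \<le> tnorm p U * dist a b"
proof -
  have u: "rp U \<in> treps p" "U = tclass p (rp U)" using tangent_rp[OF cat U] by auto
  have "tinner p U (tlog p a) = rep_inner p (rp U) (lv p a)" "tinner p U (tlog p b) = rep_inner p (rp U) (lv p b)"
    unfolding tlog_lv using tinner_class[OF cat u(1) lv_treps] u(2) by metis+
  moreover have "tnorm p U = fst (rp U)" by (simp add: tnorm_def rp_def)
  moreover have "fst (rp U) * rep_dist p (lv p a) (lv p b) \<le> fst (rp U) * dist a b"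
    using rep_dist_lv_le treps_fst[OF u(1)] by (simp add: mult_left_mono)
  ultimately show ?thesis using rep_inner_lip[OF cat u(1) lv_treps lv_treps, of a b] by simp
qed

end

context
  fixes B :: "'a::metric_space vfield" and l :: real
  assumes had: "hadamard_space TYPE('a)"
    and mono: "monotone_vf B" and surj: "surjectivity_cond B" and l: "l > 0"
begin

lemma res_pair:
  assumes z1: "tscale z1 (1 / l) (tlog z1 x1) \<in> B z1" and z2: "tscale z2 (1 / l) (tlog z2 x2) \<in> B z2"
  shows "2 * (dist z1 z2)\<^sup>2 \<le> (dist x1 z2)\<^sup>2 - (dist z2 x2)\<^sup>2 + (dist x2 z1)\<^sup>2 - (dist z1 x1)\<^sup>2"
proof -
  have m: "tinner z1 (tscale z1 (1 / l) (tlog z1 x1)) (tlog z1 z2) \<le> - tinner z2 (tscale z2 (1 / l) (tlog z2 x2)) (tlog z2 z1)"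
    using mono z1 z2 unfolding monotone_vf_def by blast
  have c: "1 / l > 0" using l by simp
  have a1: "(1/l) * ((dist z1 x1)\<^sup>2 + (dist z1 z2)\<^sup>2 - (dist x1 z2)\<^sup>2) \<le> 2 * tinner z1 (tscale z1 (1 / l) (tlog z1 x1)) (tlog z1 z2)"
    by (rule law_cos[OF had c])
  have a2: "(1/l) * ((dist z2 x2)\<^sup>2 + (dist z2 z1)\<^sup>2 - (dist x2 z1)\<^sup>2) \<le> 2 * tinner z2 (tscale z2 (1 / l) (tlog z2 x2)) (tlog z2 z1)"
    by (rule law_cos[OF had c])
  have "(1/l) * ((dist z1 x1)\<^sup>2 + (dist z1 z2)\<^sup>2 - (dist x1 z2)\<^sup>2 + ((dist z2 x2)\<^sup>2 + (dist z2 z1)\<^sup>2 - (dist x2 z1)\<^sup>2)) \<le> 0"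
    using a1 a2 m by (simp add: distrib_left)
  then have "(dist z1 x1)\<^sup>2 + (dist z1 z2)\<^sup>2 - (dist x1 z2)\<^sup>2 + ((dist z2 x2)\<^sup>2 + (dist z2 z1)\<^sup>2 - (dist x2 z1)\<^sup>2) \<le> 0"
    using l by (simp add: divide_le_0_iff)
  then show ?thesis by (simp add: dist_commute)
qed

lemma res_char: "tscale (resolvent B l x) (1 / l) (tlog (resolvent B l x) x) \<in> B (resolvent B l x)"
proof -
  obtain z where z: "tscale z (1 / l) (tlog z x) \<in> B z" using surj l unfolding surjectivity_cond_def by blast
  have "z' = z" if "tscale z' (1 / l) (tlog z' x) \<in> B z'" for z'
    using res_pair[OF that z] by (simp add: dist_commute)
  then have "\<exists>!z. tscale z (1 / l) (tlog z x) \<in> B z" using z by blast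
  then show ?thesis unfolding resolvent_def by (rule theI')
qed

lemma res_cont_bound:
  "dist (resolvent B l x) (resolvent B l x') \<le>
     dist x x' + sqrt (2 * (dist x x')\<^sup>2 + 2 * dist (resolvent B l x) x * dist x x')"
proof -
  define p where "p = resolvent B l x"
  define q where "q = resolvent B l x'"
  define \<delta> where "\<delta> = dist x x'"
  define A where "A = dist p x"
  define B' where "B' = dist q x'"
  define e where "e = dist p q"
  have pq: "2 * e\<^sup>2 \<le> (dist x q)\<^sup>2 - B'\<^sup>2 + (dist x' p)\<^sup>2 - A\<^sup>2"
    using res_pair[OF res_char[of x] res_char[of x']] by (simp add: p_def q_def e_def A_def B'_def dist_commute)
  have t1: "dist x q \<le> \<delta> + B'" using dist_triangle[of x q x'] by (simp add: \<delta>_def B'_def dist_commute)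
  have t2: "dist x' p \<le> \<delta> + A" using dist_triangle[of x' p x] by (simp add: \<delta>_def A_def dist_commute)
  have t3: "B' \<le> e + A + \<delta>"
    using dist_triangle[of q x' p] dist_triangle[of p x' x] by (simp add: \<delta>_def A_def B'_def e_def dist_commute)
  have nn: "0 \<le> \<delta>" "0 \<le> A" "0 \<le> B'" "0 \<le> e" by (simp_all add: \<delta>_def A_def B'_def e_def)
  have s1: "(dist x q)\<^sup>2 \<le> (\<delta> + B')\<^sup>2" using t1 by (simp add: power_mono)
  have s2: "(dist x' p)\<^sup>2 \<le> (\<delta> + A)\<^sup>2" using t2 by (simp add: power_mono)
  have "2 * e\<^sup>2 \<le> (\<delta> + B')\<^sup>2 - B'\<^sup>2 + (\<delta> + A)\<^sup>2 - A\<^sup>2" using pq s1 s2 by linarith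
  also have "\<dots> = 2 * \<delta>\<^sup>2 + 2 * \<delta> * (A + B')" by (simp add: power2_eq_square algebra_simps)
  finally have "e\<^sup>2 \<le> \<delta>\<^sup>2 + \<delta> * (A + B')" by simp
  also have "\<delta> * (A + B') \<le> \<delta> * (e + 2 * A + \<delta>)" using t3 nn by (intro mult_left_mono) auto
  finally have main: "e\<^sup>2 \<le> e * \<delta> + (2 * \<delta>\<^sup>2 + 2 * A * \<delta>)" by (simp add: power2_eq_square algebra_simps)
  define K where "K = 2 * \<delta>\<^sup>2 + 2 * A * \<delta>"
  have K: "K \<ge> 0" using nn by (simp add: K_def)
  have "e \<le> \<delta> + sqrt K"
  proof (rule ccontr)
    assume "\<not> e \<le> \<delta> + sqrt K"
    then have g: "e > \<delta> + sqrt K" by simp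
    have sK: "sqrt K \<ge> 0" using K by simp
    have "e * e > e * (\<delta> + sqrt K)" using g nn sK by (intro mult_strict_left_mono) linarith+
    moreover have "e * sqrt K \<ge> sqrt K * sqrt K" using g nn sK by (intro mult_right_mono) auto
    moreover have "sqrt K * sqrt K = K" using K by simp
    ultimately have "e\<^sup>2 > e * \<delta> + K" by (simp add: power2_eq_square algebra_simps)
    then show False using main by (simp add: K_def)
  qed
  then show ?thesis unfolding e_def \<delta>_def K_def A_def p_def q_def .
qed

lemma res_cont: assumes "X \<longlonglongrightarrow> x" shows "(\<lambda>k. resolvent B l (X k)) \<longlonglongrightarrow> resolvent B l x"
proof -
  define D where "D = dist (resolvent B l x) x"
  have d0: "(\<lambda>k. dist (X k) x) \<longlonglongrightarrow> 0" using assms tendsto_dist_iff by blast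
  have d: "(\<lambda>k. dist x (X k)) \<longlonglongrightarrow> 0" using d0 unfolding dist_commute[of x] .
  have d2: "(\<lambda>k. 2 * (dist x (X k))\<^sup>2 + 2 * D * dist x (X k)) \<longlonglongrightarrow> 2 * 0\<^sup>2 + 2 * D * 0"
    by (intro tendsto_add tendsto_mult tendsto_power tendsto_const d)
  have d3: "(\<lambda>k. sqrt (2 * (dist x (X k))\<^sup>2 + 2 * D * dist x (X k))) \<longlonglongrightarrow> sqrt (2 * 0\<^sup>2 + 2 * D * 0)"
    by (rule tendsto_real_sqrt[OF d2])
  have r: "(\<lambda>k. dist x (X k) + sqrt (2 * (dist x (X k))\<^sup>2 + 2 * D * dist x (X k))) \<longlonglongrightarrow> 0"
    using tendsto_add[OF d d3] by simp
  have b: "dist (resolvent B l (X k)) (resolvent B l x) \<le> dist x (X k) + sqrt (2 * (dist x (X k))\<^sup>2 + 2 * D * dist x (X k))" for k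
    using res_cont_bound[of x "X k"] unfolding D_def dist_commute[of "resolvent B l (X k)"] .
  have "(\<lambda>k. dist (resolvent B l (X k)) (resolvent B l x)) \<longlonglongrightarrow> 0"
    by (rule tendsto_sandwich[OF _ _ tendsto_const r]) (use b in auto)
  then show ?thesis using tendsto_dist_iff by blast
qed

end


lemma step_ineq:
  fixes B :: "'a::metric_space vfield" and l \<alpha> :: real and x xs :: 'a and u :: "'a tvec"
  assumes had: "hadamard_space TYPE('a)"
    and mono: "monotone_vf B" and surj: "surjectivity_cond B" and l: "l > 0"
    and strong: "strongly_monotone_vf B \<alpha>" and a1: "\<alpha> \<le> 1"
    and u: "u \<in> B xs" and uT: "u \<in> tangent_space xs"
  defines "y \<equiv> resolvent B l x" and "v \<equiv> yosida B l x"
  shows "tnorm y v = dist x y / l"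
    and "(dist y xs)\<^sup>2 \<le> (1 + 2 * l\<^sup>2) * (dist x xs)\<^sup>2 - 2 * l * \<alpha> * (dist x xs)\<^sup>2
            - 2 * l * tinner xs u (tlog xs x) + l\<^sup>2 * ((tnorm xs u)\<^sup>2 + 2 * (tnorm y v)\<^sup>2)"
    and "(dist y xs)\<^sup>2 \<le> 2 * (dist x xs)\<^sup>2 + 2 * l\<^sup>2 * (tnorm xs u)\<^sup>2"
proof -
  have vdef: "v = tscale y (1 / l) (tlog y x)" by (simp add: v_def y_def yosida_def)
  have vB: "v \<in> B y" unfolding vdef y_def by (rule res_char[OF had mono surj l])
  have c: "1 / l > 0" using l by simp
  show nv: "tnorm y v = dist x y / l" unfolding vdef using tnorm_scale_log[OF had c] by (simp add: dist_commute)
  have ap: "\<alpha> > 0" using strong by (simp add: strongly_monotone_vf_def)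
  have sm: "tinner y v (tlog y xs) \<le> - tinner xs u (tlog xs y) - \<alpha> * (dist y xs)\<^sup>2"
    using strong vB u unfolding strongly_monotone_vf_def by blast
  have lc: "(1/l) * ((dist y x)\<^sup>2 + (dist y xs)\<^sup>2 - (dist x xs)\<^sup>2) \<le> 2 * tinner y v (tlog y xs)"
    unfolding vdef by (rule law_cos[OF had c])
  define G where "G = tinner xs u (tlog xs x)"
  define N where "N = tnorm xs u"
  have N0: "N \<ge> 0" unfolding N_def by (rule tnorm_nonneg[OF had_cat0[OF had] uT])
  have lip: "\<bar>tinner xs u (tlog xs x) - tinner xs u (tlog xs y)\<bar> \<le> N * dist x y"
    unfolding N_def by (rule tinner_log_lip[OF had uT])
  have Gb: "\<bar>G\<bar> \<le> N * dist xs x" unfolding G_def N_def by (rule tinner_log_bound[OF had uT])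
  define dx where "dx = dist x xs"
  define dy where "dy = dist y xs"
  define e where "e = dist x y"
  have nn: "dx \<ge> 0" "dy \<ge> 0" "e \<ge> 0" by (simp_all add: dx_def dy_def e_def)
  have lc': "e\<^sup>2 + dy\<^sup>2 - dx\<^sup>2 \<le> 2 * l * tinner y v (tlog y xs)"
  proof -
    have "(1/l) * (e\<^sup>2 + dy\<^sup>2 - dx\<^sup>2) \<le> 2 * tinner y v (tlog y xs)"
      using lc by (simp add: e_def dy_def dx_def dist_commute)
    then have "l * ((1/l) * (e\<^sup>2 + dy\<^sup>2 - dx\<^sup>2)) \<le> l * (2 * tinner y v (tlog y xs))"
      using l by (intro mult_left_mono) auto
    then show ?thesis using l by simp
  qed
  have sm': "2 * l * tinner y v (tlog y xs) \<le> 2 * l * (- G + N * e - \<alpha> * dy\<^sup>2)"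
  proof -
    have "tinner y v (tlog y xs) \<le> - G + N * e - \<alpha> * dy\<^sup>2"
      using sm lip by (simp add: G_def e_def dy_def abs_le_iff)
    then show ?thesis using l by (intro mult_left_mono) auto
  qed
  have amgm: "2 * l * N * e \<le> l\<^sup>2 * N\<^sup>2 + e\<^sup>2"
  proof -
    have "0 \<le> (l * N - e)\<^sup>2" by simp
    then show ?thesis by (simp add: power2_eq_square algebra_simps)
  qed
  have star: "dy\<^sup>2 \<le> dx\<^sup>2 - 2 * l * G + l\<^sup>2 * N\<^sup>2 - 2 * l * \<alpha> * dy\<^sup>2"
    using lc' sm' amgm by (simp add: algebra_simps)
  have ady: "0 \<le> 2 * l * \<alpha> * dy\<^sup>2" using l ap by simp
  have Gb': "- G \<le> N * dx" using Gb by (simp add: dx_def dist_commute)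
  have "dy\<^sup>2 \<le> dx\<^sup>2 + 2 * l * (N * dx) + l\<^sup>2 * N\<^sup>2"
  proof -
    have "(2 * l) * (- G) \<le> (2 * l) * (N * dx)" using Gb' l by (intro mult_left_mono) auto
    then have "- 2 * l * G \<le> 2 * l * (N * dx)" by simp
    then show ?thesis using star ady by linarith
  qed
  also have "\<dots> \<le> 2 * dx\<^sup>2 + 2 * l\<^sup>2 * N\<^sup>2"
  proof -
    have "0 \<le> (dx - l * N)\<^sup>2" by simp
    then show ?thesis by (simp add: power2_eq_square algebra_simps)
  qed
  finally show "(dist y xs)\<^sup>2 \<le> 2 * (dist x xs)\<^sup>2 + 2 * l\<^sup>2 * (tnorm xs u)\<^sup>2"
    by (simp add: dy_def dx_def N_def)
  have dd: "dx\<^sup>2 - dy\<^sup>2 \<le> 2 * e * dx"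
  proof (cases "dx \<le> dy")
    case True
    then have "dx\<^sup>2 \<le> dy\<^sup>2" using nn by (simp add: power_mono)
    moreover have "0 \<le> 2 * e * dx" using nn by simp
    ultimately show ?thesis by linarith
  next
    case False
    have t: "dx \<le> e + dy" using dist_triangle[of x xs y] by (simp add: dx_def dy_def e_def)
    have "dx\<^sup>2 - dy\<^sup>2 = (dx - dy) * (dx + dy)" by (simp add: power2_eq_square algebra_simps)
    also have "\<dots> \<le> e * (2 * dx)" using t False nn by (intro mult_mono) auto
    finally show ?thesis by simp
  qed
  have ev: "e = l * tnorm y v" using nv l by (simp add: e_def)
  have "2 * l * \<alpha> * (dx\<^sup>2 - dy\<^sup>2) \<le> 2 * l * \<alpha> * (2 * e * dx)"
    using dd l ap by (intro mult_left_mono) auto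
  also have "\<dots> \<le> 2 * l * 1 * (2 * e * dx)" using l a1 nn by (intro mult_left_mono mult_right_mono) auto
  also have "\<dots> = 4 * l\<^sup>2 * (tnorm y v * dx)" unfolding ev by (simp add: power2_eq_square algebra_simps)
  also have "\<dots> \<le> 2 * l\<^sup>2 * ((tnorm y v)\<^sup>2 + dx\<^sup>2)"
  proof -
    have "0 \<le> (tnorm y v - dx)\<^sup>2" by simp
    then have "2 * (tnorm y v * dx) \<le> (tnorm y v)\<^sup>2 + dx\<^sup>2" by (simp add: power2_eq_square algebra_simps)
    then show ?thesis using l by (simp add: mult_left_mono)
  qed
  finally have at: "- 2 * l * \<alpha> * dy\<^sup>2 \<le> - 2 * l * \<alpha> * dx\<^sup>2 + 2 * l\<^sup>2 * ((tnorm y v)\<^sup>2 + dx\<^sup>2)"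
    by (simp add: algebra_simps)
  show "(dist y xs)\<^sup>2 \<le> (1 + 2 * l\<^sup>2) * (dist x xs)\<^sup>2 - 2 * l * \<alpha> * (dist x xs)\<^sup>2
            - 2 * l * tinner xs u (tlog xs x) + l\<^sup>2 * ((tnorm xs u)\<^sup>2 + 2 * (tnorm y v)\<^sup>2)"
    using star at unfolding dy_def[symmetric] dx_def[symmetric] G_def[symmetric] N_def[symmetric]
    by (simp add: algebra_simps)
qed

lemma dense_seq:
  fixes dummy :: "'a::metric_space"
  assumes "\<exists>D::'a set. countable D \<and> closure D = UNIV"
  obtains d :: "nat \<Rightarrow> 'a" where "\<And>y e. e > 0 \<Longrightarrow> \<exists>j. dist y (d j) < e"
proof -
  obtain D :: "'a set" where D: "countable D" "closure D = UNIV" using assms by blast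
  have ne: "D \<noteq> {}" using D(2) by auto
  define d where "d = from_nat_into D"
  have "\<exists>j. dist y (d j) < e" if e: "e > 0" for y e
  proof -
    have "y \<in> closure D" using D by simp
    then obtain z where z: "z \<in> D" "dist z y < e" using e closure_approachable by blast
    then obtain j where "z = d j" using range_from_nat_into[OF ne D(1)] unfolding d_def by (metis rangeE)
    then show ?thesis using z by (auto simp: dist_commute)
  qed
  then show ?thesis using that by blast
qed

lemma caratheodory:
  fixes f :: "'e \<Rightarrow> 'a::metric_space \<Rightarrow> 'b::metric_space"
  assumes sep: "\<exists>D::'a set. countable D \<and> closure D = UNIV"
    and meas: "\<And>y. (\<lambda>s. f s y) \<in> borel_measurable M"
    and cont: "\<And>s X y. s \<in> space M \<Longrightarrow> X \<longlonglongrightarrow> y \<Longrightarrow> (\<lambda>k. f s (X k)) \<longlonglongrightarrow> f s y"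
  shows "(\<lambda>z. f (fst z) (snd z)) \<in> borel_measurable (M \<Otimes>\<^sub>M borel)"
proof -
  obtain d :: "nat \<Rightarrow> 'a" where d: "\<And>y e. e > 0 \<Longrightarrow> \<exists>j. dist y (d j) < e" using dense_seq[OF sep] by blast
  define J where "J k y = (LEAST j. dist y (d j) < 1 / Suc k)" for k y
  have J: "dist y (d (J k y)) < 1 / Suc k" for k y
    unfolding J_def by (rule LeastI_ex) (rule d, simp)
  have dm: "(\<lambda>y. dist y (d j)) \<in> borel_measurable borel" for j
    by (intro borel_measurable_continuous_onI continuous_intros)
  have dm2[measurable]: "(\<lambda>z. dist (snd z) (d j)) \<in> borel_measurable (M \<Otimes>\<^sub>M borel)" for j
    using measurable_comp[OF measurable_snd dm[of j]] by (simp add: comp_def)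
  have Jm: "(\<lambda>z. J k (snd z)) \<in> measurable (M \<Otimes>\<^sub>M borel) (count_space UNIV)" for k
    unfolding J_def by measurable
  have gm: "(\<lambda>z. f (fst z) (d (J k (snd z)))) \<in> borel_measurable (M \<Otimes>\<^sub>M borel)" for k
  proof (rule measurable_compose_countable[where f = "\<lambda>j z. f (fst z) (d j)", OF _ Jm])
    fix j show "(\<lambda>z. f (fst z) (d j)) \<in> borel_measurable (M \<Otimes>\<^sub>M borel)"
      using measurable_comp[OF measurable_fst meas[of "d j"]] by (simp add: comp_def)
  qed
  show ?thesis
  proof (rule borel_measurable_LIMSEQ_metric[OF gm])
    fix z :: "'e \<times> 'a" assume z: "z \<in> space (M \<Otimes>\<^sub>M borel)"
    then have s: "fst z \<in> space M" by (auto simp: space_pair_measure)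
    have "(\<lambda>k. d (J k (snd z))) \<longlonglongrightarrow> snd z"
    proof (rule tendsto_sandwich[of "\<lambda>_. 0" "\<lambda>k. dist (d (J k (snd z))) (snd z)" sequentially "\<lambda>k. 1 / Suc k", THEN tendsto_dist_iff[THEN iffD2]])
      show "\<forall>\<^sub>F k in sequentially. 0 \<le> dist (d (J k (snd z))) (snd z)" by simp
      show "\<forall>\<^sub>F k in sequentially. dist (d (J k (snd z))) (snd z) \<le> 1 / Suc k"
        using J by (simp add: dist_commute less_imp_le)
      show "(\<lambda>k. 0::real) \<longlonglongrightarrow> 0" by simp
      show "(\<lambda>k. 1 / real (Suc k)) \<longlonglongrightarrow> 0" by (rule LIMSEQ_Suc[OF lim_const_over_n]) 
    qed
    then show "(\<lambda>k. f (fst z) (d (J k (snd z)))) \<longlonglongrightarrow> f (fst z) (snd z)" by (rule cont[OF s])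
  qed
qed


definition tpred :: "'a::metric_space \<Rightarrow> 'a tvec set \<Rightarrow> bool" where
  "tpred x = (\<lambda>U. U \<subseteq> tangent_space x \<and> (\<forall>u\<in>U. \<exists>e>0. {v \<in> tangent_space x. tdist x u v < e} \<subseteq> U))"

lemma istop_tpred: "istopology (tpred x)"
  unfolding istopology_def
proof (intro conjI allI impI)
  fix S T assume S: "tpred x S" and T: "tpred x T"
  show "tpred x (S \<inter> T)" unfolding tpred_def
  proof (intro conjI ballI)
    show "S \<inter> T \<subseteq> tangent_space x" using S by (auto simp: tpred_def)
    fix u assume u: "u \<in> S \<inter> T"
    obtain e1 where e1: "e1 > 0" "{v \<in> tangent_space x. tdist x u v < e1} \<subseteq> S" using S u by (auto simp: tpred_def)
    obtain e2 where e2: "e2 > 0" "{v \<in> tangent_space x. tdist x u v < e2} \<subseteq> T" using T u by (auto simp: tpred_def)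
    show "\<exists>e>0. {v \<in> tangent_space x. tdist x u v < e} \<subseteq> S \<inter> T"
      using e1 e2 by (intro exI[of _ "min e1 e2"]) auto
  qed
next
  fix K assume K: "\<forall>S\<in>K. tpred x S"
  show "tpred x (\<Union>K)" unfolding tpred_def
  proof (intro conjI ballI)
    show "\<Union>K \<subseteq> tangent_space x" using K by (auto simp: tpred_def)
    fix u assume "u \<in> \<Union>K"
    then obtain S where S: "S \<in> K" "u \<in> S" by blast
    have "tpred x S" using K S by blast
    then obtain e where "e > 0" "{v \<in> tangent_space x. tdist x u v < e} \<subseteq> S" using S(2) unfolding tpred_def by blast
    then show "\<exists>e>0. {v \<in> tangent_space x. tdist x u v < e} \<subseteq> \<Union>K" using S by blast
  qed
qed

lemma openin_tangent: "openin (tangent_topology x) U \<longleftrightarrow> tpred x U"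
proof -
  have "tangent_topology x = topology (tpred x)" unfolding tangent_topology_def tpred_def ..
  then show ?thesis using fun_cong[OF topology_inverse'[OF istop_tpred[of x]], of U] by simp
qed

lemma space_tangent_borel: "space (tangent_borel x) = tangent_space x"
  unfolding tangent_borel_def by (rule space_measure_of) (auto simp: openin_tangent tpred_def)

lemma tpred_sets: "tpred x U \<Longrightarrow> U \<in> sets (tangent_borel x)"
  unfolding tangent_borel_def
  by (subst sets_measure_of) (auto simp: openin_tangent tpred_def)

lemma tinner_meas:
  assumes cat: "CAT0_ineq TYPE('a::metric_space)" and V: "V \<in> tangent_space (x::'a)"
  shows "(\<lambda>U. tinner x U V) \<in> borel_measurable (tangent_borel x)"
proof (rule borel_measurableI)
  fix S :: "real set" assume S: "open S"
  have "tpred x ((\<lambda>U. tinner x U V) -` S \<inter> tangent_space x)" unfolding tpred_def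
  proof (intro conjI ballI)
    fix U assume U: "U \<in> (\<lambda>U. tinner x U V) -` S \<inter> tangent_space x"
    then obtain \<epsilon> where \<epsilon>: "\<epsilon> > 0" "\<And>r. dist r (tinner x U V) < \<epsilon> \<Longrightarrow> r \<in> S"
      using S unfolding open_dist by blast
    define e where "e = \<epsilon> / (tnorm x V + 1)"
    have nV: "tnorm x V \<ge> 0" by (rule tnorm_nonneg[OF cat V])
    have e: "e > 0" using \<epsilon> nV by (simp add: e_def)
    have "{W \<in> tangent_space x. tdist x U W < e} \<subseteq> (\<lambda>U. tinner x U V) -` S \<inter> tangent_space x"
    proof safe
      fix W assume W: "W \<in> tangent_space x" "tdist x U W < e"
      have "\<bar>tinner x U V - tinner x W V\<bar> \<le> tnorm x V * tdist x U W"
        using tinner_lip[OF cat _ V W(1)] U by auto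
      also have "\<dots> \<le> tnorm x V * e" using W nV by (intro mult_left_mono) auto
      also have "\<dots> < \<epsilon>" using \<epsilon> nV by (simp add: e_def field_simps)
      finally have "tinner x W V \<in> S" using \<epsilon>(2) by (simp add: dist_real_def abs_minus_commute)
      then show "W \<in> (\<lambda>U. tinner x U V) -` S" by simp
    qed
    then show "\<exists>e>0. {W \<in> tangent_space x. tdist x U W < e} \<subseteq> (\<lambda>U. tinner x U V) -` S \<inter> tangent_space x"
      using e by blast
  qed auto
  then show "(\<lambda>U. tinner x U V) -` S \<inter> space (tangent_borel x) \<in> sets (tangent_borel x)"
    unfolding space_tangent_borel by (rule tpred_sets)
qed

definition gen :: "'w measure \<Rightarrow> 'e measure \<Rightarrow> (nat \<Rightarrow> 'w \<Rightarrow> 'e) \<Rightarrow> nat \<Rightarrow> 'w set set" where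
  "gen P M \<xi> n = {\<xi> i -` B \<inter> space P | i B. i \<in> {1..n} \<and> B \<in> sets M}"

lemma gen_pow: "gen P M \<xi> n \<subseteq> Pow (space P)" by (auto simp: gen_def)

lemma filt_space: "space (natural_filtration P M \<xi> n) = space P"
  unfolding natural_filtration_def using gen_pow[of P M \<xi> n] by (simp add: gen_def space_measure_of_conv)

lemma filt_sets: "sets (natural_filtration P M \<xi> n) = sigma_sets (space P) (gen P M \<xi> n)"
  unfolding natural_filtration_def using gen_pow[of P M \<xi> n] by (simp add: gen_def)

context
  fixes P :: "'w measure" and M :: "'e measure" and \<xi> :: "nat \<Rightarrow> 'w \<Rightarrow> 'e"
  assumes xm: "\<And>i. i \<ge> 1 \<Longrightarrow> \<xi> i \<in> measurable P M"
begin

lemma gen_sets: "gen P M \<xi> n \<subseteq> sets P"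
  using xm measurable_sets by (fastforce simp: gen_def)

lemma filt_subalg: "subalgebra P (natural_filtration P M \<xi> n)"
  unfolding subalgebra_def filt_space filt_sets using gen_sets by (simp add: sets.sigma_sets_subset)

lemma filt_mono: "m \<le> n \<Longrightarrow> subalgebra (natural_filtration P M \<xi> n) (natural_filtration P M \<xi> m)"
  unfolding subalgebra_def filt_space filt_sets
proof (intro conjI refl sigma_sets_subseteq)
  assume "m \<le> n"
  then show "gen P M \<xi> m \<subseteq> gen P M \<xi> n" unfolding gen_def by fastforce
qed

lemma filt_xi: "i \<in> {1..n} \<Longrightarrow> \<xi> i \<in> measurable (natural_filtration P M \<xi> n) M"
proof (rule measurableI)
  fix \<omega> assume i: "i \<in> {1..n}" and "\<omega> \<in> space (natural_filtration P M \<xi> n)"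
  then show "\<xi> i \<omega> \<in> space M" using xm[of i] measurable_space by (auto simp: filt_space)
next
  fix B assume i: "i \<in> {1..n}" and B: "B \<in> sets M"
  then have "\<xi> i -` B \<inter> space P \<in> gen P M \<xi> n" by (auto simp: gen_def)
  then show "\<xi> i -` B \<inter> space (natural_filtration P M \<xi> n) \<in> sets (natural_filtration P M \<xi> n)"
    unfolding filt_space filt_sets by auto
qed

lemma filt_sfs: assumes "prob_space P" shows "sigma_finite_subalgebra P (natural_filtration P M \<xi> n)"
proof -
  interpret prob_space P by (rule assms)
  have "finite_measure_subalgebra P (natural_filtration P M \<xi> n)"
    unfolding finite_measure_subalgebra_def finite_measure_subalgebra_axioms_def
    using filt_subalg finite_measure_axioms by blast
  then show ?thesis by (rule finite_measure_subalgebra_is_sigma_finite)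
qed

end

lemma indep_filt:
  assumes pP: "prob_space P" and iid: "prob_space.indep_vars P (\<lambda>_. M) \<xi> {1..}"
  shows "prob_space.indep_set P (sets (natural_filtration P M \<xi> n))
            (sigma_sets (space P) {\<xi> (Suc n) -` B \<inter> space P | B. B \<in> sets M})"
proof -
  interpret prob_space P by (rule pP)
  define E where "E i = {\<xi> i -` B \<inter> space P | B. B \<in> sets M}" for i
  define I where "I j = (if j then {1..n} else {Suc n})" for j
  have ind: "indep_sets E {1..}" using iid unfolding indep_vars_def2 E_def by blast
  have ind2: "indep_sets E (\<Union>j\<in>UNIV. I j)"
    by (rule indep_sets_mono_index[OF _ ind]) (auto simp: I_def)
  have "indep_sets (\<lambda>j. sigma_sets (space P) (\<Union>i\<in>I j. E i)) UNIV"
  proof (rule indep_sets_collect_sigma[OF ind2])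
    fix i j assume "j \<in> (UNIV::bool set)" "i \<in> I j"
    show "Int_stable (E i)" unfolding Int_stable_def E_def
    proof safe
      fix A B assume "A \<in> sets M" "B \<in> sets M"
      then show "\<exists>C. (\<xi> i -` A \<inter> space P) \<inter> (\<xi> i -` B \<inter> space P) = \<xi> i -` C \<inter> space P \<and> C \<in> sets M"
        by (intro exI[of _ "A \<inter> B"]) auto
    qed
  next
    show "disjoint_family_on I UNIV" unfolding disjoint_family_on_def I_def by auto
  qed
  moreover have "(\<lambda>j. sigma_sets (space P) (\<Union>i\<in>I j. E i)) =
     case_bool (sets (natural_filtration P M \<xi> n)) (sigma_sets (space P) {\<xi> (Suc n) -` B \<inter> space P | B. B \<in> sets M})"
  proof (rule ext)
    fix j :: bool
    show "sigma_sets (space P) (\<Union>i\<in>I j. E i) =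
     case_bool (sets (natural_filtration P M \<xi> n)) (sigma_sets (space P) {\<xi> (Suc n) -` B \<inter> space P | B. B \<in> sets M}) j"
    proof (cases j)
      case True
      have "(\<Union>i\<in>I j. E i) = gen P M \<xi> n" using True unfolding I_def E_def gen_def by fastforce
      then show ?thesis using True by (simp add: filt_sets)
    next
      case False
      then show ?thesis by (simp add: I_def E_def)
    qed
  qed
  ultimately show ?thesis unfolding indep_set_def by simp
qed

lemma cond_indep:
  assumes pP: "prob_space P" and pM: "prob_space M"
    and iid: "prob_space.indep_vars P (\<lambda>_. M) \<xi> {1..}"
    and dist: "distr P M (\<xi> (Suc n)) = M"
    and h: "integrable M h"
  shows "AE \<omega> in P. real_cond_exp P (natural_filtration P M \<xi> n) (\<lambda>\<omega>. h (\<xi> (Suc n) \<omega>)) \<omega> = (\<integral>s. h s \<partial>M)"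
    and "integrable P (\<lambda>\<omega>. h (\<xi> (Suc n) \<omega>))"
proof -
  interpret prob_space P by (rule pP)
  have xm: "\<xi> i \<in> measurable P M" if "i \<ge> 1" for i
    using iid that unfolding indep_vars_def2 by auto
  interpret sigma_finite_subalgebra P "natural_filtration P M \<xi> n" by (rule filt_sfs[where \<xi>=\<xi> and P=P and M=M, OF xm pP])
  let ?F = "natural_filtration P M \<xi> n"
  have xs: "\<xi> (Suc n) \<in> measurable P M" by (rule xm) simp
  have hm: "h \<in> borel_measurable M" using h by simp
  define c where "c = (\<integral>s. h s \<partial>M)"
  show intY: "integrable P (\<lambda>\<omega>. h (\<xi> (Suc n) \<omega>))"
    using integrable_distr_eq[OF xs hm] h dist by simp
  have intc: "(\<integral>\<omega>. h (\<xi> (Suc n) \<omega>) \<partial>P) = c"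
    using integral_distr[OF xs hm] dist by (simp add: c_def)
  have Ym: "(\<lambda>\<omega>. h (\<xi> (Suc n) \<omega>)) \<in> borel_measurable P" using intY by simp
  have "AE \<omega> in P. real_cond_exp P ?F (\<lambda>\<omega>. h (\<xi> (Suc n) \<omega>)) \<omega> = (\<lambda>_. c) \<omega>"
  proof (rule real_cond_exp_charact)
    fix A assume A: "A \<in> sets ?F"
    have AP: "A \<in> sets P" using A filt_subalg[where \<xi>=\<xi> and P=P and M=M, OF xm] by (auto simp: subalgebra_def)
    have indA: "indicator A \<in> borel_measurable ?F" using A by simp
    have "indep_var borel (indicator A :: 'a \<Rightarrow> real) borel (\<lambda>\<omega>. h (\<xi> (Suc n) \<omega>))"
      unfolding indep_var_eq
    proof (intro conjI)
      show "random_variable borel (indicator A :: 'a \<Rightarrow> real)" using AP by simp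
      show "random_variable borel (\<lambda>\<omega>. h (\<xi> (Suc n) \<omega>))" by (rule Ym)
      have ind: "indep_set (sets ?F) (sigma_sets (space P) {\<xi> (Suc n) -` B \<inter> space P | B. B \<in> sets M})"
        by (rule indep_filt[OF pP iid])
      show "indep_set (sigma_sets (space P) {(indicator A :: 'a \<Rightarrow> real) -` S \<inter> space P |S. S \<in> sets borel})
          (sigma_sets (space P) {(\<lambda>\<omega>. h (\<xi> (Suc n) \<omega>)) -` S \<inter> space P |S. S \<in> sets borel})"
        unfolding indep_set_def
      proof (rule indep_sets_mono_sets[OF ind[unfolded indep_set_def]])
        fix j :: bool
        show "case_bool (sigma_sets (space P) {(indicator A :: 'a \<Rightarrow> real) -` S \<inter> space P |S. S \<in> sets borel})
          (sigma_sets (space P) {(\<lambda>\<omega>. h (\<xi> (Suc n) \<omega>)) -` S \<inter> space P |S. S \<in> sets borel}) j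
          \<subseteq> case_bool (sets ?F) (sigma_sets (space P) {\<xi> (Suc n) -` B \<inter> space P | B. B \<in> sets M}) j"
        proof (cases j)
          case True
          have "{(indicator A :: 'a \<Rightarrow> real) -` S \<inter> space P |S. S \<in> sets borel} \<subseteq> sets ?F"
            using measurable_sets[OF indA] by (auto simp: filt_space)
          then have "sigma_sets (space ?F) {(indicator A :: 'a \<Rightarrow> real) -` S \<inter> space P |S. S \<in> sets borel} \<subseteq> sets ?F"
            by (rule sets.sigma_sets_subset)
          then show ?thesis using True by (simp add: filt_space)
        next
          case False
          have "{(\<lambda>\<omega>. h (\<xi> (Suc n) \<omega>)) -` S \<inter> space P |S. S \<in> sets borel} \<subseteq>
                {\<xi> (Suc n) -` B \<inter> space P | B. B \<in> sets M}"
          proof safe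
            fix S :: "real set" assume S: "S \<in> sets borel"
            have "(\<lambda>\<omega>. h (\<xi> (Suc n) \<omega>)) -` S \<inter> space P = \<xi> (Suc n) -` (h -` S \<inter> space M) \<inter> space P"
              using measurable_space[OF xs] by auto
            moreover have "h -` S \<inter> space M \<in> sets M" using measurable_sets[OF hm S] .
            ultimately show "\<exists>B. (\<lambda>\<omega>. h (\<xi> (Suc n) \<omega>)) -` S \<inter> space P = \<xi> (Suc n) -` B \<inter> space P \<and> B \<in> sets M"
              by blast
          qed
          then show ?thesis using False by (simp add: sigma_sets_subseteq)
        qed
      qed
    qed
    then have "(\<integral>\<omega>. indicator A \<omega> * h (\<xi> (Suc n) \<omega>) \<partial>P) = (\<integral>\<omega>. indicator A \<omega> \<partial>P) * (\<integral>\<omega>. h (\<xi> (Suc n) \<omega>) \<partial>P)"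
      using intY AP by (intro indep_var_lebesgue_integral) (auto intro!: integrable_real_indicator simp: emeasure_eq_measure)
    also have "\<dots> = measure P A * c" using intc AP by simp
    also have "\<dots> = (\<integral>\<omega>. indicator A \<omega> * c \<partial>P)" using AP by simp
    finally show "(\<integral>\<omega>\<in>A. h (\<xi> (Suc n) \<omega>) \<partial>P) = (\<integral>\<omega>\<in>A. c \<partial>P)"
      by (simp add: set_lebesgue_integral_def)
  qed (use intY in auto)
  then show "AE \<omega> in P. real_cond_exp P ?F (\<lambda>\<omega>. h (\<xi> (Suc n) \<omega>)) \<omega> = (\<integral>s. h s \<partial>M)"
    by (simp add: c_def)
qed

lemma (in sigma_finite_subalgebra) lin5:
  assumes i: "integrable M f1" "integrable M f2" "integrable M f3" "integrable M f4" "integrable M f5"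
  shows "AE x in M. real_cond_exp M F (\<lambda>x. c1 * f1 x - c2 * f2 x - c3 * f3 x + c4 * f4 x + c5 * f5 x) x =
     c1 * real_cond_exp M F f1 x - c2 * real_cond_exp M F f2 x - c3 * real_cond_exp M F f3 x
       + c4 * real_cond_exp M F f4 x + c5 * real_cond_exp M F f5 x"
proof -
  have h1: "AE x in M. real_cond_exp M F (\<lambda>x. (c1 * f1 x - c2 * f2 x - c3 * f3 x + c4 * f4 x) + c5 * f5 x) x =
     real_cond_exp M F (\<lambda>x. c1 * f1 x - c2 * f2 x - c3 * f3 x + c4 * f4 x) x + real_cond_exp M F (\<lambda>x. c5 * f5 x) x"
    by (rule real_cond_exp_add) (use i in auto)
  have h2: "AE x in M. real_cond_exp M F (\<lambda>x. (c1 * f1 x - c2 * f2 x - c3 * f3 x) + c4 * f4 x) x =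
     real_cond_exp M F (\<lambda>x. c1 * f1 x - c2 * f2 x - c3 * f3 x) x + real_cond_exp M F (\<lambda>x. c4 * f4 x) x"
    by (rule real_cond_exp_add) (use i in auto)
  have h3: "AE x in M. real_cond_exp M F (\<lambda>x. (c1 * f1 x - c2 * f2 x) - c3 * f3 x) x =
     real_cond_exp M F (\<lambda>x. c1 * f1 x - c2 * f2 x) x - real_cond_exp M F (\<lambda>x. c3 * f3 x) x"
    by (rule real_cond_exp_diff) (use i in auto)
  have h4: "AE x in M. real_cond_exp M F (\<lambda>x. c1 * f1 x - c2 * f2 x) x =
     real_cond_exp M F (\<lambda>x. c1 * f1 x) x - real_cond_exp M F (\<lambda>x. c2 * f2 x) x"
    by (rule real_cond_exp_diff) (use i in auto)
  have m1: "AE x in M. real_cond_exp M F (\<lambda>x. c1 * f1 x) x = c1 * real_cond_exp M F f1 x" using i by simp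
  have m2: "AE x in M. real_cond_exp M F (\<lambda>x. c2 * f2 x) x = c2 * real_cond_exp M F f2 x" using i by simp
  have m3: "AE x in M. real_cond_exp M F (\<lambda>x. c3 * f3 x) x = c3 * real_cond_exp M F f3 x" using i by simp
  have m4: "AE x in M. real_cond_exp M F (\<lambda>x. c4 * f4 x) x = c4 * real_cond_exp M F f4 x" using i by simp
  have m5: "AE x in M. real_cond_exp M F (\<lambda>x. c5 * f5 x) x = c5 * real_cond_exp M F f5 x" using i by simp
  show ?thesis using h1 h2 h3 h4 m1 m2 m3 m4 m5 by eventually_elim simp
qed

lemma dist_meas: "f \<in> borel_measurable P \<Longrightarrow> (\<lambda>\<omega>. dist (f \<omega>) (c::'a::metric_space)) \<in> borel_measurable P"
proof -
  assume f: "f \<in> borel_measurable P"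
  have "(\<lambda>y. dist y c) \<in> borel_measurable borel" by (intro borel_measurable_continuous_onI continuous_intros)
  from measurable_comp[OF f this] show ?thesis by (simp add: comp_def)
qed

theorem mainTheorem7:
  fixes M :: "'e measure" and P :: "'w measure"
    and A :: "'e \<Rightarrow> 'a::metric_space \<Rightarrow> 'a tvec set"
    and x0 xstar :: 'a and lam :: "nat \<Rightarrow> real"
    and \<xi> :: "nat \<Rightarrow> 'w \<Rightarrow> 'e" and x :: "nat \<Rightarrow> 'w \<Rightarrow> 'a"
    and \<alpha> :: "'e \<Rightarrow> real" and \<phi>star :: "'e \<Rightarrow> 'a tvec"
  assumes hadamard: "hadamard_space TYPE('a)"
    and sepX: "\<exists>D::'a set. countable D \<and> closure D = UNIV"
    and sepT: "\<And>y::'a. separable_space (tangent_topology y)"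
    and probM: "prob_space M" and probP: "prob_space P"
    and A_tangent: "\<And>s y. s \<in> space M \<Longrightarrow> A s y \<subseteq> tangent_space y"
    and A_mono: "\<And>s. s \<in> space M \<Longrightarrow> monotone_vf (A s)"
    and A_surj: "\<And>s. s \<in> space M \<Longrightarrow> surjectivity_cond (A s)"
    and J_meas: "\<And>l y. l > 0 \<Longrightarrow> (\<lambda>s. resolvent (A s) l y) \<in> borel_measurable M"
    \<comment> \<open>iteration\<close>
    and lam_pos: "\<And>n. lam n > 0"
    and x_0: "\<And>\<omega>. x 0 \<omega> = x0"
    and x_Suc: "\<And>n \<omega>. x (Suc n) \<omega> = resolvent (A (\<xi> (Suc n) \<omega>)) (lam n) (x n \<omega>)"
    \<comment> \<open>(A0)\<close>
    and A0_sq: "summable (\<lambda>n. (lam n)\<^sup>2)"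
    and A0_div: "\<not> summable lam"
    and A0_iid: "prob_space.indep_vars P (\<lambda>_. M) \<xi> {1..}"
    and A0_distr: "\<And>i. i \<ge> 1 \<Longrightarrow> distr P M (\<xi> i) = M"
    \<comment> \<open>(A1)\<close>
    and A1_meas: "\<alpha> \<in> borel_measurable M"
    and A1_range: "\<And>s. s \<in> space M \<Longrightarrow> \<alpha> s \<in> {0<..1}"
    and A1_strong: "\<And>s. s \<in> space M \<Longrightarrow> strongly_monotone_vf (A s) (\<alpha> s)"
    and A1_pos: "(\<integral>s. \<alpha> s \<partial>M) > 0"
    \<comment> \<open>(A2)\<close>
    and A2_sel: "\<phi>star \<in> selections M A 2 xstar"
    and A2_zero: "is_tangent_barycenter M xstar \<phi>star (tzero xstar)"
    \<comment> \<open>(A3)\<close>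
    and A3: "\<And>n. AE \<omega> in P. real_cond_exp P (natural_filtration P M \<xi> n)
               (\<lambda>\<omega>. tinner xstar (\<phi>star (\<xi> (Suc n) \<omega>)) (tlog xstar (x n \<omega>))) \<omega> = 0"
  shows "\<forall>n. AE \<omega> in P.
     real_cond_exp P (natural_filtration P M \<xi> n) (\<lambda>\<omega>. (dist (x (Suc n) \<omega>) xstar)\<^sup>2) \<omega>
       \<le> (1 + 2 * (lam n)\<^sup>2) * (dist (x n \<omega>) xstar)\<^sup>2
          - 2 * lam n * (\<integral>s. \<alpha> s \<partial>M) * (dist (x n \<omega>) xstar)\<^sup>2
          + (lam n)\<^sup>2 * (2 * real_cond_exp P (natural_filtration P M \<xi> n)
                 (\<lambda>\<omega>. (tnorm (x (Suc n) \<omega>) (yosida (A (\<xi> (Suc n) \<omega>)) (lam n) (x n \<omega>)))\<^sup>2) \<omega>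
               + (\<integral>s. (tnorm xstar (\<phi>star s))\<^sup>2 \<partial>M))"
proof -
  have cat: "CAT0_ineq TYPE('a)" by (rule had_cat0[OF hadamard])
  interpret pP: prob_space P by (rule probP)
  interpret pM: prob_space M by (rule probM)
  let ?F = "natural_filtration P M \<xi>"
  have xm: "\<xi> i \<in> measurable P M" if "i \<ge> 1" for i
    using A0_iid that unfolding pP.indep_vars_def2 by auto
  have xsp: "\<xi> (Suc n) \<omega> \<in> space M" if "\<omega> \<in> space P" for n \<omega>
    using measurable_space[OF xm[of "Suc n"]] that by simp
  have fmono: "subalgebra (?F n) (?F m)" if "m \<le> n" for m n
    using filt_mono[where \<xi>=\<xi> and P=P and M=M, OF xm that] .
  have fsub: "subalgebra P (?F n)" for n
    using filt_subalg[where \<xi>=\<xi> and P=P and M=M, OF xm] .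
  have fxi: "\<xi> i \<in> measurable (?F n) M" if "i \<in> {1..n}" for i n
    using filt_xi[where \<xi>=\<xi> and P=P and M=M, OF xm that] .
  have Jm: "(\<lambda>z. resolvent (A (fst z)) l (snd z)) \<in> borel_measurable (M \<Otimes>\<^sub>M borel)" if l: "l > 0" for l
  proof (rule caratheodory[OF sepX])
    show "(\<lambda>s. resolvent (A s) l y) \<in> borel_measurable M" for y by (rule J_meas[OF l])
    show "(\<lambda>k. resolvent (A s) l (X k)) \<longlonglongrightarrow> resolvent (A s) l y" if "s \<in> space M" "X \<longlonglongrightarrow> y" for s X y
      by (rule res_cont[OF hadamard A_mono[OF that(1)] A_surj[OF that(1)] l that(2)])
  qed
  have xF: "x n \<in> borel_measurable (?F n)" for n
  proof (induction n)
    case 0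
    have "x 0 = (\<lambda>_. x0)" using x_0 by auto
    then show ?case by simp
  next
    case (Suc n)
    have eq: "x (Suc n) = (\<lambda>z. resolvent (A (fst z)) (lam n) (snd z)) \<circ> (\<lambda>\<omega>. (\<xi> (Suc n) \<omega>, x n \<omega>))"
      using x_Suc by (auto simp: comp_def)
    have p1: "\<xi> (Suc n) \<in> measurable (?F (Suc n)) M" by (rule fxi) auto
    have p2: "x n \<in> borel_measurable (?F (Suc n))"
      by (rule measurable_from_subalg[OF fmono Suc.IH]) simp
    show ?case unfolding eq by (rule measurable_comp[OF measurable_Pair[OF p1 p2] Jm[OF lam_pos]])
  qed
  have xP: "x n \<in> borel_measurable P" for n
    by (rule measurable_from_subalg[OF fsub xF])
  have phi_A: "\<phi>star s \<in> A s xstar" if "s \<in> space M" for s using A2_sel that by (auto simp: selections_def)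
  have phi_T: "\<phi>star s \<in> tangent_space xstar" if "s \<in> space M" for s using A_tangent[OF that] phi_A[OF that] by auto
  have phi_m: "\<phi>star \<in> M \<rightarrow>\<^sub>M tangent_borel xstar" using A2_sel by (auto simp: selections_def tangent_Lp_def)
  define n0 where "n0 s = (tnorm xstar (\<phi>star s))\<^sup>2" for s
  have n0_int: "integrable M n0"
  proof -
    have "integrable M (\<lambda>s. (tdist xstar (\<phi>star s) (tzero xstar))^2)" using A2_sel by (auto simp: selections_def tangent_Lp_def)
    moreover have "integrable M (\<lambda>s. (tdist xstar (\<phi>star s) (tzero xstar))^2) = integrable M (\<lambda>s. n0 s)"
      by (rule Bochner_Integration.integrable_cong[OF refl]) (simp add: n0_def tdist_zero[OF cat phi_T])
    ultimately show ?thesis by simp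
  qed
  have Phim: "(\<lambda>z. tinner xstar (\<phi>star (fst z)) (tlog xstar (snd z))) \<in> borel_measurable (M \<Otimes>\<^sub>M borel)"
  proof (rule caratheodory[OF sepX])
    fix y
    show "(\<lambda>s. tinner xstar (\<phi>star s) (tlog xstar y)) \<in> borel_measurable M"
      using measurable_comp[OF phi_m tinner_meas[OF cat tlog_tangent[OF hadamard]]] by (simp add: comp_def)
  next
    fix s :: 'e and X :: "nat \<Rightarrow> 'a" and y :: 'a assume s: "s \<in> space M" and X: "X \<longlonglongrightarrow> y"
    have b: "\<bar>tinner xstar (\<phi>star s) (tlog xstar (X k)) - tinner xstar (\<phi>star s) (tlog xstar y)\<bar> \<le> tnorm xstar (\<phi>star s) * dist (X k) y" for k
      by (rule tinner_log_lip[OF hadamard phi_T[OF s]])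
    have d: "(\<lambda>k. dist (X k) y) \<longlonglongrightarrow> 0" using X tendsto_dist_iff by blast
    have "(\<lambda>k. tnorm xstar (\<phi>star s) * dist (X k) y) \<longlonglongrightarrow> tnorm xstar (\<phi>star s) * 0"
      by (rule tendsto_mult[OF tendsto_const d])
    then have lim0: "(\<lambda>k. tnorm xstar (\<phi>star s) * dist (X k) y) \<longlonglongrightarrow> 0" by simp
    have "(\<lambda>k. tinner xstar (\<phi>star s) (tlog xstar (X k)) - tinner xstar (\<phi>star s) (tlog xstar y)) \<longlonglongrightarrow> 0"
    proof (rule Lim_null_comparison[OF always_eventually lim0])
      show "\<forall>k. norm (tinner xstar (\<phi>star s) (tlog xstar (X k)) - tinner xstar (\<phi>star s) (tlog xstar y)) \<le> tnorm xstar (\<phi>star s) * dist (X k) y"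
        using b by simp
    qed
    then show "(\<lambda>k. tinner xstar (\<phi>star s) (tlog xstar (X k))) \<longlonglongrightarrow> tinner xstar (\<phi>star s) (tlog xstar y)"
      by (simp add: LIM_zero_iff)
  qed
  have Psim: "(\<lambda>z. dist (snd z) (resolvent (A (fst z)) l (snd z))) \<in> borel_measurable (M \<Otimes>\<^sub>M borel)" if l: "l > 0" for l
  proof (rule caratheodory[OF sepX])
    fix y
    show "(\<lambda>s. dist y (resolvent (A s) l y)) \<in> borel_measurable M"
    proof -
      have "(\<lambda>z. dist y z) \<in> borel_measurable borel" by (intro borel_measurable_continuous_onI continuous_intros)
      from measurable_comp[OF J_meas[OF l] this] show ?thesis by (simp add: comp_def)
    qed
  next
    fix s :: 'e and X :: "nat \<Rightarrow> 'a" and y :: 'a assume s: "s \<in> space M" and X: "X \<longlonglongrightarrow> y"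
    show "(\<lambda>k. dist (X k) (resolvent (A s) l (X k))) \<longlonglongrightarrow> dist y (resolvent (A s) l y)"
      by (intro tendsto_dist X res_cont[OF hadamard A_mono[OF s] A_surj[OF s] l])
  qed
  have step: "tnorm (x (Suc n) \<omega>) (yosida (A (\<xi> (Suc n) \<omega>)) (lam n) (x n \<omega>)) = dist (x n \<omega>) (x (Suc n) \<omega>) / lam n
     \<and> (dist (x (Suc n) \<omega>) xstar)\<^sup>2 \<le> (1 + 2 * (lam n)\<^sup>2) * (dist (x n \<omega>) xstar)\<^sup>2 - 2 * lam n * \<alpha> (\<xi> (Suc n) \<omega>) * (dist (x n \<omega>) xstar)\<^sup>2
            - 2 * lam n * tinner xstar (\<phi>star (\<xi> (Suc n) \<omega>)) (tlog xstar (x n \<omega>))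
            + (lam n)\<^sup>2 * ((tnorm xstar (\<phi>star (\<xi> (Suc n) \<omega>)))\<^sup>2 + 2 * (tnorm (x (Suc n) \<omega>) (yosida (A (\<xi> (Suc n) \<omega>)) (lam n) (x n \<omega>)))\<^sup>2)
     \<and> (dist (x (Suc n) \<omega>) xstar)\<^sup>2 \<le> 2 * (dist (x n \<omega>) xstar)\<^sup>2 + 2 * (lam n)\<^sup>2 * (tnorm xstar (\<phi>star (\<xi> (Suc n) \<omega>)))\<^sup>2"
    if \<omega>: "\<omega> \<in> space P" for n \<omega>
  proof -
    let ?s = "\<xi> (Suc n) \<omega>"
    have s: "?s \<in> space M" by (rule xsp[OF \<omega>])
    have a1: "\<alpha> ?s \<le> 1" using A1_range[OF s] by simp
    note st = step_ineq[OF hadamard A_mono[OF s] A_surj[OF s] lam_pos[of n] A1_strong[OF s] a1 phi_A[OF s] phi_T[OF s], where x="x n \<omega>"]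
    show ?thesis unfolding x_Suc[of n \<omega>] using st by simp
  qed
  have n0_pos: "n0 s \<ge> 0" for s by (simp add: n0_def)
  have Nint: "integrable P (\<lambda>\<omega>. n0 (\<xi> (Suc n) \<omega>))" for n
    by (rule cond_indep(2)[OF probP probM A0_iid A0_distr n0_int]) simp
  have dxm: "(\<lambda>\<omega>. (dist (x n \<omega>) xstar)\<^sup>2) \<in> borel_measurable (?F n)" for n
    using dist_meas[OF xF[of n], of xstar] by measurable
  have dxmP: "(\<lambda>\<omega>. (dist (x n \<omega>) xstar)\<^sup>2) \<in> borel_measurable P" for n
    using dist_meas[OF xP[of n], of xstar] by measurable
  have dxint: "integrable P (\<lambda>\<omega>. (dist (x n \<omega>) xstar)\<^sup>2)" for n
  proof (induction n)
    case 0
    show ?case using x_0 by simp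
  next
    case (Suc n)
    show ?case
    proof (rule Bochner_Integration.integrable_bound[OF _ dxmP])
      show "integrable P (\<lambda>\<omega>. 2 * (dist (x n \<omega>) xstar)\<^sup>2 + 2 * (lam n)\<^sup>2 * n0 (\<xi> (Suc n) \<omega>))"
        using Suc.IH Nint[of n] by simp
      show "AE \<omega> in P. norm ((dist (x (Suc n) \<omega>) xstar)\<^sup>2) \<le> norm (2 * (dist (x n \<omega>) xstar)\<^sup>2 + 2 * (lam n)\<^sup>2 * n0 (\<xi> (Suc n) \<omega>))"
      proof (rule AE_I2)
        fix \<omega> assume \<omega>: "\<omega> \<in> space P"
        have "(dist (x (Suc n) \<omega>) xstar)\<^sup>2 \<le> 2 * (dist (x n \<omega>) xstar)\<^sup>2 + 2 * (lam n)\<^sup>2 * n0 (\<xi> (Suc n) \<omega>)"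
          using step[OF \<omega>, of n] by (simp add: n0_def)
        moreover have "0 \<le> 2 * (dist (x n \<omega>) xstar)\<^sup>2 + 2 * (lam n)\<^sup>2 * n0 (\<xi> (Suc n) \<omega>)" using n0_pos by simp
        ultimately show "norm ((dist (x (Suc n) \<omega>) xstar)\<^sup>2) \<le> norm (2 * (dist (x n \<omega>) xstar)\<^sup>2 + 2 * (lam n)\<^sup>2 * n0 (\<xi> (Suc n) \<omega>))"
          by simp
      qed
    qed
  qed
  show ?thesis
  proof
    fix n
    define l where "l = lam n"
    have l: "l > 0" using lam_pos by (simp add: l_def)
    define f1 where "f1 \<omega> = (dist (x (Suc n) \<omega>) xstar)\<^sup>2" for \<omega>
    define dx where "dx \<omega> = (dist (x n \<omega>) xstar)\<^sup>2" for \<omega>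
    define aa where "aa \<omega> = \<alpha> (\<xi> (Suc n) \<omega>)" for \<omega>
    define G where "G \<omega> = tinner xstar (\<phi>star (\<xi> (Suc n) \<omega>)) (tlog xstar (x n \<omega>))" for \<omega>
    define N where "N \<omega> = n0 (\<xi> (Suc n) \<omega>)" for \<omega>
    define V where "V \<omega> = (tnorm (x (Suc n) \<omega>) (yosida (A (\<xi> (Suc n) \<omega>)) (lam n) (x n \<omega>)))\<^sup>2" for \<omega>
    interpret S: sigma_finite_subalgebra P "?F n"
      using filt_sfs[where \<xi>=\<xi> and P=P and M=M, OF xm probP] .
    have dxF: "dx \<in> borel_measurable (?F n)" using dxm[of n] by (simp add: dx_def[abs_def])
    have dxi: "integrable P dx" using dxint[of n] by (simp add: dx_def[abs_def])
    have f1i: "integrable P f1" using dxint[of "Suc n"] by (simp add: f1_def[abs_def])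
    have f1m: "f1 \<in> borel_measurable P" using f1i by simp
    have dxP: "dx \<in> borel_measurable P" using dxi by simp
    have Ni: "integrable P N" using Nint[of n] by (simp add: N_def[abs_def])
    have NP: "N \<in> borel_measurable P" using Ni by simp
    have aam: "aa \<in> borel_measurable P"
      using measurable_comp[OF xm[of "Suc n"] A1_meas] by (simp add: aa_def[abs_def] comp_def)
    have aar: "0 < aa \<omega> \<and> aa \<omega> \<le> 1" if "\<omega> \<in> space P" for \<omega>
      using A1_range[OF xsp[OF that, of n]] by (simp add: aa_def)
    have Gm: "G \<in> borel_measurable P"
      using measurable_comp[OF measurable_Pair[OF xm[of "Suc n"] xP[of n]] Phim] by (simp add: G_def[abs_def] comp_def)
    have Psi: "(\<lambda>\<omega>. (dist (x n \<omega>) (resolvent (A (\<xi> (Suc n) \<omega>)) l (x n \<omega>)) / l)\<^sup>2) \<in> borel_measurable P"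
    proof -
      have "(\<lambda>\<omega>. dist (x n \<omega>) (resolvent (A (\<xi> (Suc n) \<omega>)) l (x n \<omega>))) \<in> borel_measurable P"
        using measurable_comp[OF measurable_Pair[OF xm[of "Suc n"] xP[of n]] Psim[OF l]] by (simp add: comp_def)
      then show ?thesis by measurable
    qed
    have Veq: "V \<omega> = (dist (x n \<omega>) (resolvent (A (\<xi> (Suc n) \<omega>)) l (x n \<omega>)) / l)\<^sup>2" if "\<omega> \<in> space P" for \<omega>
      using step[OF that, of n] x_Suc[of n \<omega>] by (simp add: V_def l_def)
    have Vm: "V \<in> borel_measurable P" using Psi measurable_cong[of P V, OF Veq] by simp
    have dx0: "dx \<omega> \<ge> 0" "f1 \<omega> \<ge> 0" "N \<omega> \<ge> 0" "V \<omega> \<ge> 0" for \<omega> by (simp_all add: dx_def f1_def N_def n0_def V_def)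
    have aadxi: "integrable P (\<lambda>\<omega>. dx \<omega> * aa \<omega>)"
    proof (rule Bochner_Integration.integrable_bound[OF dxi])
      show "(\<lambda>\<omega>. dx \<omega> * aa \<omega>) \<in> borel_measurable P" using dxP aam by measurable
      show "AE \<omega> in P. norm (dx \<omega> * aa \<omega>) \<le> norm (dx \<omega>)"
      proof (rule AE_I2)
        fix \<omega> assume "\<omega> \<in> space P"
        then have "0 < aa \<omega>" "aa \<omega> \<le> 1" using aar by auto
        then show "norm (dx \<omega> * aa \<omega>) \<le> norm (dx \<omega>)" using dx0[of \<omega>]
          by (simp add: abs_mult mult_left_le)
      qed
    qed
    have Gi: "integrable P G"
    proof (rule Bochner_Integration.integrable_bound[of P "\<lambda>\<omega>. (N \<omega> + dx \<omega>) / 2"])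
      show "integrable P (\<lambda>\<omega>. (N \<omega> + dx \<omega>) / 2)" using Ni dxi by simp
      show "G \<in> borel_measurable P" by (rule Gm)
      show "AE \<omega> in P. norm (G \<omega>) \<le> norm ((N \<omega> + dx \<omega>) / 2)"
      proof (rule AE_I2)
        fix \<omega> assume \<omega>: "\<omega> \<in> space P"
        let ?t = "tnorm xstar (\<phi>star (\<xi> (Suc n) \<omega>))" and ?d = "dist (x n \<omega>) xstar"
        have "\<bar>G \<omega>\<bar> \<le> ?t * dist xstar (x n \<omega>)"
          unfolding G_def by (rule tinner_log_bound[OF hadamard phi_T[OF xsp[OF \<omega>]]])
        also have "\<dots> = ?t * ?d" by (simp add: dist_commute)
        also have "\<dots> \<le> (?t\<^sup>2 + ?d\<^sup>2) / 2"
        proof -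
          have "0 \<le> (?t - ?d)\<^sup>2" by simp
          then show ?thesis by (simp add: power2_eq_square algebra_simps)
        qed
        finally show "norm (G \<omega>) \<le> norm ((N \<omega> + dx \<omega>) / 2)"
          using dx0[of \<omega>] by (simp add: N_def n0_def dx_def)
      qed
    qed
    have Vi: "integrable P V"
    proof (rule Bochner_Integration.integrable_bound[of P "\<lambda>\<omega>. 2 * (dx \<omega> + f1 \<omega>) / l\<^sup>2"])
      show "integrable P (\<lambda>\<omega>. 2 * (dx \<omega> + f1 \<omega>) / l\<^sup>2)" using dxi f1i by simp
      show "V \<in> borel_measurable P" by (rule Vm)
      show "AE \<omega> in P. norm (V \<omega>) \<le> norm (2 * (dx \<omega> + f1 \<omega>) / l\<^sup>2)"
      proof (rule AE_I2)
        fix \<omega> assume \<omega>: "\<omega> \<in> space P"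
        let ?a = "dist (x n \<omega>) xstar" and ?b = "dist (x (Suc n) \<omega>) xstar"
        have t: "dist (x n \<omega>) (x (Suc n) \<omega>) \<le> ?a + ?b" using dist_triangle[of "x n \<omega>" "x (Suc n) \<omega>" xstar]
          by (simp add: dist_commute)
        have "(dist (x n \<omega>) (x (Suc n) \<omega>))\<^sup>2 \<le> (?a + ?b)\<^sup>2" using t by (simp add: power_mono)
        also have "\<dots> \<le> 2 * (?a\<^sup>2 + ?b\<^sup>2)"
        proof -
          have "0 \<le> (?a - ?b)\<^sup>2" by simp
          then show ?thesis by (simp add: power2_eq_square algebra_simps)
        qed
        finally have "(dist (x n \<omega>) (x (Suc n) \<omega>))\<^sup>2 / l\<^sup>2 \<le> 2 * (?a\<^sup>2 + ?b\<^sup>2) / l\<^sup>2"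
          using l by (simp add: divide_right_mono)
        moreover have "V \<omega> = (dist (x n \<omega>) (x (Suc n) \<omega>))\<^sup>2 / l\<^sup>2"
          using Veq[OF \<omega>] x_Suc[of n \<omega>] by (simp add: power_divide l_def)
        ultimately show "norm (V \<omega>) \<le> norm (2 * (dx \<omega> + f1 \<omega>) / l\<^sup>2)"
          using dx0[of \<omega>] by (simp add: dx_def f1_def)
      qed
    qed
    have VV: "(\<lambda>\<omega>. (tnorm (x (Suc n) \<omega>) (yosida (A (\<xi> (Suc n) \<omega>)) (lam n) (x n \<omega>)))\<^sup>2) = V"
      by (rule ext) (simp add: V_def)
    have FF: "(\<lambda>\<omega>. (dist (x (Suc n) \<omega>) xstar)\<^sup>2) = f1"
      by (rule ext) (simp add: f1_def)
    define R where "R \<omega> = (1 + 2 * l\<^sup>2) * dx \<omega> - 2 * l * (dx \<omega> * aa \<omega>) - 2 * l * G \<omega> + l\<^sup>2 * N \<omega> + 2 * l\<^sup>2 * V \<omega>" for \<omega>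
    have Ri: "integrable P R" unfolding R_def[abs_def] using dxi aadxi Gi Ni Vi by simp
    have pw: "AE \<omega> in P. f1 \<omega> \<le> R \<omega>"
    proof (rule AE_I2)
      fix \<omega> assume \<omega>: "\<omega> \<in> space P"
      show "f1 \<omega> \<le> R \<omega>" using conjunct1[OF conjunct2[OF step[OF \<omega>, of n]]]
        by (simp add: f1_def R_def dx_def aa_def G_def N_def n0_def V_def l_def algebra_simps)
    qed
    have AE1: "AE \<omega> in P. real_cond_exp P (?F n) f1 \<omega> \<le> real_cond_exp P (?F n) R \<omega>"
      by (rule S.real_cond_exp_mono[OF pw f1i Ri])
    have AE2: "AE \<omega> in P. real_cond_exp P (?F n) R \<omega> =
       (1 + 2 * l\<^sup>2) * real_cond_exp P (?F n) dx \<omega> - 2 * l * real_cond_exp P (?F n) (\<lambda>\<omega>. dx \<omega> * aa \<omega>) \<omega>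
        - 2 * l * real_cond_exp P (?F n) G \<omega> + l\<^sup>2 * real_cond_exp P (?F n) N \<omega> + 2 * l\<^sup>2 * real_cond_exp P (?F n) V \<omega>"
      unfolding R_def by (rule S.lin5[OF dxi aadxi Gi Ni Vi])
    have AE3: "AE \<omega> in P. real_cond_exp P (?F n) dx \<omega> = dx \<omega>"
      by (rule S.real_cond_exp_F_meas[OF dxi dxF])
    have AE4: "AE \<omega> in P. real_cond_exp P (?F n) (\<lambda>\<omega>. dx \<omega> * aa \<omega>) \<omega> = dx \<omega> * real_cond_exp P (?F n) aa \<omega>"
      by (rule S.real_cond_exp_mult[OF dxF aam aadxi])
    have aint: "integrable M \<alpha>"
    proof (rule pM.integrable_const_bound[where B=1])
      show "AE s in M. norm (\<alpha> s) \<le> 1"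
      proof (rule AE_I2)
        fix s assume "s \<in> space M"
        then have "0 < \<alpha> s" "\<alpha> s \<le> 1" using A1_range by auto
        then show "norm (\<alpha> s) \<le> 1" by simp
      qed
    qed (rule A1_meas)
    have AE5: "AE \<omega> in P. real_cond_exp P (?F n) aa \<omega> = (\<integral>s. \<alpha> s \<partial>M)"
      using cond_indep(1)[OF probP probM A0_iid A0_distr aint] by (simp add: aa_def[abs_def])
    have AE6: "AE \<omega> in P. real_cond_exp P (?F n) G \<omega> = 0"
      using A3[of n] by (simp add: G_def[abs_def])
    have AE7: "AE \<omega> in P. real_cond_exp P (?F n) N \<omega> = (\<integral>s. n0 s \<partial>M)"
      using cond_indep(1)[OF probP probM A0_iid A0_distr n0_int] by (simp add: N_def[abs_def])
    show "AE \<omega> in P.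
     real_cond_exp P (?F n) (\<lambda>\<omega>. (dist (x (Suc n) \<omega>) xstar)\<^sup>2) \<omega>
       \<le> (1 + 2 * (lam n)\<^sup>2) * (dist (x n \<omega>) xstar)\<^sup>2
          - 2 * lam n * (\<integral>s. \<alpha> s \<partial>M) * (dist (x n \<omega>) xstar)\<^sup>2
          + (lam n)\<^sup>2 * (2 * real_cond_exp P (?F n)
                 (\<lambda>\<omega>. (tnorm (x (Suc n) \<omega>) (yosida (A (\<xi> (Suc n) \<omega>)) (lam n) (x n \<omega>)))\<^sup>2) \<omega>
               + (\<integral>s. (tnorm xstar (\<phi>star s))\<^sup>2 \<partial>M))"
      using AE1 AE2 AE3 AE4 AE5 AE6 AE7
      unfolding VV FF n0_def[abs_def, symmetric]
    proof eventually_elim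
      case (elim \<omega>)
      then show ?case by (simp add: dx_def l_def algebra_simps)
    qed
  qed
qed

end
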